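(* For every $t>0$, $\mathbf R\in S'_{\mathbf R}$ and $\mathbf K\in S'_{\mathbf K}$, the partial Hessians $\nabla^2_{\mathbf x\mathbf x}f_t$ and $\nabla^2_{\mathbf y\mathbf y}f_t$ of $f_t$ are non-singular, where $\mathbf x=\mathrm{veh}(\mathbf R)$ and $\mathbf y=\mathrm{vec}(\mathbf N)$.
   Context: All matrices are real. Fix integers $m,n_1,n_2\ge 1$, $J\ge 0$. Let $\mathbf H_1\in\mathbb R^{n_1\times m}$, $\mathbf H_2\in\mathbb R^{n_2\times m}$, $\mathbf H_{3j}\in\mathbb R^{n_{3j}\times m}$ ($j=1,\dots,J$); $\mathbf W_2=\mathbf H_2^T\mathbf H_2$, $\mathbf W_{3j}=\mathbf H_{3j}^T\mathbf H_{3j}$, $\mathbf H=\begin{bmatrix}\mathbf H_1\\ \mathbf H_2\end{bmatrix}$; $P_T,P_{Ij}>0$. $S'_{\mathbf R}=\{\mathbf R\text{ symmetric}:\mathbf R>0,\ \mathrm{tr}(\mathbf R)<P_T,\ \mathrm{tr}(\mathbf W_{3j}\mathbf R)<P_{Ij}\ \forall j\}$; $S'_{\mathbf K}=\{\mathbf K=\begin{bmatrix}\mathbf I&\mathbf N\\ \mathbf N^T&\mathbf I\end{bmatrix}:\mathbf N\in\mathbb R^{n_1\times n_2},\ \mathbf K>0\}$. $f(\mathbf R,\mathbf K)=\ln|\mathbf I+\mathbf K^{-1}\mathbf H\mathbf R\mathbf H^T|-\ln|\mathbf I+\mathbf W_2\mathbf R|$; for $t>0$, $f_t(\mathbf R,\mathbf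 K)=f(\mathbf R,\mathbf K)+t^{-1}\ln|\mathbf R|+t^{-1}\ln(P_T-\mathrm{tr}\mathbf R)+\sum_j t^{-1}\ln(P_{Ij}-\mathrm{tr}(\mathbf W_{3j}\mathbf R))-t^{-1}\ln|\mathbf K|$. $\mathrm{veh}(\mathbf R)$ is the vector of lower-triangular (including diagonal) entries of $\mathbf R$, $\mathrm{vec}(\mathbf N)$ stacks the columns of $\mathbf N$; $f_t$ is viewed as a function of the independent real variables $\mathbf x,\mathbf y$. *)

theory Defs
  imports "HOL-Analysis.Analysis" "Jordan_Normal_Form.Determinant" "Jordan_Normal_Form.Gauss_Jordan_Elimination"
begin

definition mtrace :: "real mat \<Rightarrow> real" where
  "mtrace A = (\<Sum>i<dim_row A. A $$ (i,i))"

definition pos_def :: "nat \<Rightarrow> real mat \<Rightarrow> bool" where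
  "pos_def n A \<longleftrightarrow> A \<in> carrier_mat n n \<and> transpose_mat A = A \<and>
     (\<forall>v\<in>carrier_vec n. v \<noteq> 0\<^sub>v n \<longrightarrow> v \<bullet> (A *\<^sub>v v) > 0)"

(* matrix inverse (used only for invertible matrices) *)
definition minv :: "real mat \<Rightarrow> real mat" where
  "minv A = the (mat_inverse A)"

definition SR :: "nat \<Rightarrow> real \<Rightarrow> nat \<Rightarrow> (nat \<Rightarrow> real mat) \<Rightarrow> (nat \<Rightarrow> real) \<Rightarrow> real mat set" where
  "SR m PT J W3 PI = {R. pos_def m R \<and> mtrace R < PT \<and>
        (\<forall>j\<in>{1..J}. mtrace (W3 j * R) < PI j)}"

definition Kmat :: "nat \<Rightarrow> nat \<Rightarrow> real mat \<Rightarrow> real mat" where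
  "Kmat n1 n2 N = four_block_mat (1\<^sub>m n1) N (transpose_mat N) (1\<^sub>m n2)"

definition SK :: "nat \<Rightarrow> nat \<Rightarrow> real mat set" where
  "SK n1 n2 = {K. \<exists>N \<in> carrier_mat n1 n2. K = Kmat n1 n2 N \<and> pos_def (n1 + n2) K}"

definition f_obj :: "real mat \<Rightarrow> real mat \<Rightarrow> real mat \<Rightarrow> real mat \<Rightarrow> real" where
  "f_obj H1 H2 R K =
     (let H = H1 @\<^sub>r H2; W2 = transpose_mat H2 * H2 in
      ln (det (1\<^sub>m (dim_row H) + minv K * H * R * transpose_mat H))
      - ln (det (1\<^sub>m (dim_row R) + W2 * R)))"

definition f_bar :: "real mat \<Rightarrow> real mat \<Rightarrow> nat \<Rightarrow> (nat \<Rightarrow> real mat) \<Rightarrow> real \<Rightarrow>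
     (nat \<Rightarrow> real) \<Rightarrow> real \<Rightarrow> real mat \<Rightarrow> real mat \<Rightarrow> real" where
  "f_bar H1 H2 J W3 PT PI t R K =
     f_obj H1 H2 R K + ln (det R) / t + ln (PT - mtrace R) / t
     + (\<Sum>j\<in>{1..J}. ln (PI j - mtrace (W3 j * R)) / t) - ln (det K) / t"

(* veh: lower-triangular entries (incl. diagonal), column by column *)
definition veh_list :: "nat \<Rightarrow> (nat \<times> nat) list" where
  "veh_list m = concat (map (\<lambda>j. map (\<lambda>i. (i,j)) [j..<m]) [0..<m])"

definition veh :: "nat \<Rightarrow> real mat \<Rightarrow> (nat \<Rightarrow> real)" where
  "veh m R k = R $$ (veh_list m ! k)"

(* the symmetric matrix whose veh is x *)
definition mat_of_veh :: "nat \<Rightarrow> (nat \<Rightarrow> real) \<Rightarrow> real mat" where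
  "mat_of_veh m x = mat m m (\<lambda>(i,j). x (THE k. k < length (veh_list m) \<and>
                                         veh_list m ! k = (max i j, min i j)))"

(* vec: column stacking of an n1 x n2 matrix *)
definition vecm :: "nat \<Rightarrow> real mat \<Rightarrow> (nat \<Rightarrow> real)" where
  "vecm n1 N k = N $$ (k mod n1, k div n1)"

definition mat_of_vecm :: "nat \<Rightarrow> nat \<Rightarrow> (nat \<Rightarrow> real) \<Rightarrow> real mat" where
  "mat_of_vecm n1 n2 y = mat n1 n2 (\<lambda>(i,j). y (i + n1 * j))"

definition partial :: "((nat \<Rightarrow> real) \<Rightarrow> real) \<Rightarrow> nat \<Rightarrow> (nat \<Rightarrow> real) \<Rightarrow> real" where
  "partial g i x = deriv (\<lambda>r. g (x(i := x i + r))) 0"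

definition hessian :: "((nat \<Rightarrow> real) \<Rightarrow> real) \<Rightarrow> nat \<Rightarrow> (nat \<Rightarrow> real) \<Rightarrow> real mat" where
  "hessian g d x = mat d d (\<lambda>(i,j). partial (\<lambda>z. partial g i z) j x)"

end

theory Submission
  imports Defs
begin


definition inv' :: "real mat \<Rightarrow> real mat" where
  "inv' A = (1 / det A) \<cdot>\<^sub>m adj_mat A"

lemma inv'_dims[simp]: "dim_row (inv' A) = dim_row A" "dim_col (inv' A) = dim_col A"
  unfolding inv'_def adj_mat_def by auto

lemma ct: "A \<in> carrier_mat (dim_row A) (dim_col A)" by (rule carrier_matI) auto

lemma massoc: fixes A B C :: "real mat"
  assumes "dim_col A = dim_row B" "dim_col B = dim_row C" shows "A * B * C = A * (B * C)"
proof -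
  have "A \<in> carrier_mat (dim_row A) (dim_col A)" "B \<in> carrier_mat (dim_col A) (dim_col B)"
    "C \<in> carrier_mat (dim_col B) (dim_col C)" using assms by (auto intro!: carrier_matI)
  thus ?thesis by (rule assoc_mult_mat)
qed

lemma msmult_r: fixes A B :: "real mat"
  assumes "dim_col A = dim_row B" shows "A * (k \<cdot>\<^sub>m B) = k \<cdot>\<^sub>m (A * B)"
proof -
  have "A \<in> carrier_mat (dim_row A) (dim_col A)" "B \<in> carrier_mat (dim_col A) (dim_col B)"
    using assms by (auto intro!: carrier_matI)
  thus ?thesis by (rule mult_smult_distrib)
qed

lemma msmult_l: fixes A B :: "real mat"
  assumes "dim_col A = dim_row B" shows "(k \<cdot>\<^sub>m A) * B = k \<cdot>\<^sub>m (A * B)"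
proof -
  have "A \<in> carrier_mat (dim_row A) (dim_col A)" "B \<in> carrier_mat (dim_col A) (dim_col B)"
    using assms by (auto intro!: carrier_matI)
  thus ?thesis by (rule mult_smult_assoc_mat)
qed

lemma madd_r: fixes A B C :: "real mat"
  assumes "dim_col A = dim_row B" "dim_row B = dim_row C" "dim_col B = dim_col C"
  shows "A * (B + C) = A * B + A * C"
proof -
  have "A \<in> carrier_mat (dim_row A) (dim_col A)" "B \<in> carrier_mat (dim_col A) (dim_col B)"
    "C \<in> carrier_mat (dim_col A) (dim_col B)" using assms by (auto intro!: carrier_matI)
  thus ?thesis by (rule mult_add_distrib_mat)
qed

lemma madd_l: fixes A B C :: "real mat"
  assumes "dim_col A = dim_row C" "dim_row A = dim_row B" "dim_col A = dim_col B"
  shows "(A + B) * C = A * C + B * C"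
proof -
  have "A \<in> carrier_mat (dim_row A) (dim_col A)" "B \<in> carrier_mat (dim_row A) (dim_col A)"
    "C \<in> carrier_mat (dim_col A) (dim_col C)" using assms by (auto intro!: carrier_matI)
  thus ?thesis by (rule add_mult_distrib_mat)
qed

lemma mminus_r: fixes A B C :: "real mat"
  assumes "dim_col A = dim_row B" "dim_row B = dim_row C" "dim_col B = dim_col C"
  shows "A * (B - C) = A * B - A * C"
proof -
  have "A \<in> carrier_mat (dim_row A) (dim_col A)" "B \<in> carrier_mat (dim_col A) (dim_col B)"
    "C \<in> carrier_mat (dim_col A) (dim_col B)" using assms by (auto intro!: carrier_matI)
  thus ?thesis by (rule mult_minus_distrib_mat)
qed

lemma mminus_l: fixes A B C :: "real mat"
  assumes "dim_col A = dim_row C" "dim_row A = dim_row B" "dim_col A = dim_col B"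
  shows "(A - B) * C = A * C - B * C"
proof -
  have "A \<in> carrier_mat (dim_row A) (dim_col A)" "B \<in> carrier_mat (dim_row A) (dim_col A)"
    "C \<in> carrier_mat (dim_col A) (dim_col C)" using assms by (auto intro!: carrier_matI)
  thus ?thesis by (rule minus_mult_distrib_mat)
qed

lemmas malg = massoc msmult_r msmult_l

lemma inv'_carrier[simp]: "A \<in> carrier_mat n n \<Longrightarrow> inv' A \<in> carrier_mat n n"
  unfolding inv'_def by (metis adj_mat(1) smult_carrier_mat)

lemma inv'_right: assumes A: "A \<in> carrier_mat n n" and d: "det A \<noteq> 0"
  shows "A * inv' A = 1\<^sub>m n"
proof -
  have "A * inv' A = (1 / det A) \<cdot>\<^sub>m (A * adj_mat A)"
    unfolding inv'_def using A adj_mat(1)[OF A] by (simp add: mult_smult_distrib)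
  also have "\<dots> = 1\<^sub>m n" using adj_mat(2)[OF A] d by (auto simp: eq_matI)
  finally show ?thesis .
qed

lemma inv'_left: assumes A: "A \<in> carrier_mat n n" and d: "det A \<noteq> 0"
  shows "inv' A * A = 1\<^sub>m n"
proof -
  have "inv' A * A = (1 / det A) \<cdot>\<^sub>m (adj_mat A * A)"
    unfolding inv'_def using A adj_mat(1)[OF A] by (simp add: mult_smult_assoc_mat)
  also have "\<dots> = 1\<^sub>m n" using adj_mat(3)[OF A] d by (auto simp: eq_matI)
  finally show ?thesis .
qed

lemma mtrace_mult: assumes "A \<in> carrier_mat n m" "B \<in> carrier_mat m n"
  shows "mtrace (A * B) = (\<Sum>i<n. \<Sum>k<m. A $$ (i,k) * B $$ (k,i))"
  unfolding mtrace_def using assms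
  by (auto simp: scalar_prod_def row_def col_def atLeast0LessThan intro!: sum.cong)

lemma mtrace_comm: assumes "A \<in> carrier_mat n m" "B \<in> carrier_mat m n"
  shows "mtrace (A * B) = mtrace (B * A)"
  unfolding mtrace_mult[OF assms] mtrace_mult[OF assms(2,1)]
  by (subst sum.swap) (simp add: mult.commute)

lemma mtrace_smult: "A \<in> carrier_mat n n \<Longrightarrow> mtrace (c \<cdot>\<^sub>m A) = c * mtrace A"
  unfolding mtrace_def by (auto simp: sum_distrib_left intro!: sum.cong)

lemma mtrace_add: assumes "A \<in> carrier_mat n n" "B \<in> carrier_mat n n"
  shows "mtrace (A + B) = mtrace A + mtrace B"
  unfolding mtrace_def using assms by (auto simp: sum.distrib intro!: sum.cong)

lemma mtrace_minus: assumes "A \<in> carrier_mat n n" "B \<in> carrier_mat n n"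
  shows "mtrace (A - B) = mtrace A - mtrace B"
  unfolding mtrace_def using assms by (auto simp: sum_subtractf intro!: sum.cong)

lemma det_line: assumes A: "A \<in> carrier_mat n n" and B: "B \<in> carrier_mat n n"
  shows "det (A + r \<cdot>\<^sub>m B) = (\<Sum>p\<in>{p. p permutes {0..<n}}. signof p *
            (\<Prod>i=0..<n. A $$ (i, p i) + r * B $$ (i, p i)))"
proof -
  have C: "A + r \<cdot>\<^sub>m B \<in> carrier_mat n n" using A B by auto
  show ?thesis unfolding det_def'[OF C]
  proof (rule sum.cong[OF refl], rule arg_cong[where f = "\<lambda>x. _ * x"], rule prod.cong[OF refl])
    fix p i assume "p \<in> {p. p permutes {0..<n}}" "i \<in> {0..<n}"
    hence "p i < n" "i < n" using permutes_in_image by fastforce+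
    thus "(A + r \<cdot>\<^sub>m B) $$ (i, p i) = A $$ (i, p i) + r * B $$ (i, p i)" using A B by auto
  qed
qed

lemma det_cont: fixes A B :: "real mat" assumes A: "A \<in> carrier_mat n n" and B: "B \<in> carrier_mat n n"
  shows "continuous_on UNIV (\<lambda>r. det (A + r \<cdot>\<^sub>m B))"
  unfolding det_line[OF A B]
  by (intro continuous_on_sum continuous_on_mult continuous_on_const continuous_on_prod continuous_on_add continuous_on_id)

lemma det_deriv: fixes A B :: "real mat"
  assumes A: "A \<in> carrier_mat n n" and B: "B \<in> carrier_mat n n"
  shows "((\<lambda>r. det (A + r \<cdot>\<^sub>m B)) has_real_derivative mtrace (adj_mat A * B)) (at 0)"
proof -
  let ?P = "{p. p permutes {0..<n}}"
  have D: "((\<lambda>r. \<Sum>p\<in>?P. signof p * (\<Prod>i=0..<n. A $$ (i, p i) + r * B $$ (i, p i)))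
     has_real_derivative (\<Sum>p\<in>?P. signof p * (\<Sum>i\<in>{0..<n}. B $$ (i, p i) *
         (\<Prod>j\<in>{0..<n} - {i}. A $$ (j, p j))))) (at 0)"
  proof (intro DERIV_sum DERIV_cmult)
    fix p assume "p \<in> ?P"
    have "((\<lambda>r. \<Prod>i=0..<n. A $$ (i, p i) + r * B $$ (i, p i)) has_real_derivative
       (\<Sum>i\<in>{0..<n}. B $$ (i, p i) * (\<Prod>j\<in>{0..<n} - {i}. A $$ (j, p j) + 0 * B $$ (j, p j)))) (at 0)"
      by (rule has_field_derivative_prod) (auto intro!: derivative_eq_intros)
    thus "((\<lambda>r. \<Prod>i=0..<n. A $$ (i, p i) + r * B $$ (i, p i)) has_real_derivative
       (\<Sum>i\<in>{0..<n}. B $$ (i, p i) * (\<Prod>j\<in>{0..<n} - {i}. A $$ (j, p j)))) (at 0)" by simp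
  qed
  define Ai where "Ai i = mat n n (\<lambda>(j,l). if j = i then B $$ (i,l) else A $$ (j,l))" for i
  have AiC: "Ai i \<in> carrier_mat n n" for i unfolding Ai_def by auto
  have detAi: "det (Ai i) = (\<Sum>p\<in>?P. signof p * (B $$ (i, p i) *
         (\<Prod>j\<in>{0..<n} - {i}. A $$ (j, p j))))" if i: "i < n" for i
    unfolding det_def'[OF AiC]
  proof (rule sum.cong[OF refl])
    fix p assume "p \<in> ?P"
    hence p: "p permutes {0..<n}" by auto
    have pl: "j < n \<Longrightarrow> p j < n" for j using permutes_in_image[OF p] by auto
    have "(\<Prod>j = 0..<n. Ai i $$ (j, p j)) = Ai i $$ (i, p i) * (\<Prod>j\<in>{0..<n} - {i}. Ai i $$ (j, p j))"
      by (rule prod.remove) (use i in auto)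
    also have "\<dots> = B $$ (i, p i) * (\<Prod>j\<in>{0..<n} - {i}. A $$ (j, p j))"
      using i pl unfolding Ai_def by (auto intro!: prod.cong)
    finally show "signof p * (\<Prod>j = 0..<n. Ai i $$ (j, p j)) = signof p * (B $$ (i, p i) *
         (\<Prod>j\<in>{0..<n} - {i}. A $$ (j, p j)))" by simp
  qed
  have delAi: "mat_delete (Ai i) i l = mat_delete A i l" if i: "i < n" for i l
    unfolding mat_delete_def Ai_def using A i by (auto intro!: eq_matI)
  have lapAi: "det (Ai i) = (\<Sum>l<n. B $$ (i,l) * cofactor A i l)" if i: "i < n" for i
    unfolding laplace_expansion_row[OF AiC i] cofactor_def delAi[OF i]
    using i unfolding Ai_def by (auto intro!: sum.cong)
  have "(\<Sum>p\<in>?P. signof p * (\<Sum>i\<in>{0..<n}. B $$ (i, p i) *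
         (\<Prod>j\<in>{0..<n} - {i}. A $$ (j, p j)))) = (\<Sum>i\<in>{0..<n}. \<Sum>p\<in>?P. signof p * (B $$ (i, p i) *
         (\<Prod>j\<in>{0..<n} - {i}. A $$ (j, p j))))"
    by (subst sum.swap) (simp add: sum_distrib_left)
  also have "\<dots> = (\<Sum>i<n. \<Sum>l<n. B $$ (i,l) * cofactor A i l)"
    using detAi lapAi by (auto simp: atLeast0LessThan intro!: sum.cong)
  also have "\<dots> = mtrace (adj_mat A * B)"
    unfolding mtrace_mult[OF adj_mat(1)[OF A] B] using A
    by (subst sum.swap) (auto simp: adj_mat_def mult.commute intro!: sum.cong)
  finally have eq: "(\<Sum>p\<in>?P. signof p * (\<Sum>i\<in>{0..<n}. B $$ (i, p i) *
         (\<Prod>j\<in>{0..<n} - {i}. A $$ (j, p j)))) = mtrace (adj_mat A * B)" .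
  show ?thesis using D unfolding eq det_line[OF A B, symmetric] .
qed

lemma lndet_deriv: fixes A B :: "real mat"
  assumes A: "A \<in> carrier_mat n n" and B: "B \<in> carrier_mat n n" and d: "det A > 0"
  shows "((\<lambda>r. ln (det (A + r \<cdot>\<^sub>m B))) has_real_derivative mtrace (inv' A * B)) (at 0)"
proof -
  have A0: "A + 0 \<cdot>\<^sub>m B = A" using A B by (auto intro!: eq_matI)
  have "DERIV ln (det (A + 0 \<cdot>\<^sub>m B)) :> inverse (det A)" using DERIV_ln[of "det A"] d A0 by simp
  from DERIV_chain2[OF this det_deriv[OF A B]]
  have "((\<lambda>r. ln (det (A + r \<cdot>\<^sub>m B))) has_real_derivative inverse (det A) * mtrace (adj_mat A * B)) (at 0)" .
  moreover have "inverse (det A) * mtrace (adj_mat A * B) = mtrace (inv' A * B)"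
    unfolding inv'_def using A B adj_mat(1)[OF A]
    by (simp add: mult_smult_assoc_mat mtrace_smult[of _ n] divide_inverse)
  ultimately show ?thesis by simp
qed

lemma mat_delete_line: assumes A: "A \<in> carrier_mat n n" and B: "B \<in> carrier_mat n n"
  shows "mat_delete (A + r \<cdot>\<^sub>m B) i j = mat_delete A i j + r \<cdot>\<^sub>m mat_delete B i j"
  unfolding mat_delete_def using A B by (auto intro!: eq_matI)

lemma isCont_UNIV: "continuous_on UNIV f \<Longrightarrow> isCont f x"
  by (simp add: continuous_on_eq_continuous_at)

lemma inv_entry_cont: fixes A B :: "real mat"
  assumes A: "A \<in> carrier_mat n n" and B: "B \<in> carrier_mat n n" and d: "det A \<noteq> 0"
    and i: "i < n" and j: "j < n"
  shows "isCont (\<lambda>r. inv' (A + r \<cdot>\<^sub>m B) $$ (i,j)) 0"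
proof -
  have A0: "A + 0 \<cdot>\<^sub>m B = A" using A B by (auto intro!: eq_matI)
  have eq: "inv' (A + r \<cdot>\<^sub>m B) $$ (i,j) = (-1)^(j+i) * det (mat_delete A j i + r \<cdot>\<^sub>m mat_delete B j i)
     / det (A + r \<cdot>\<^sub>m B)" for r
    unfolding inv'_def adj_mat_def cofactor_def mat_delete_line[OF A B, symmetric] using A B i j by auto
  have c1: "isCont (\<lambda>r. det (mat_delete A j i + r \<cdot>\<^sub>m mat_delete B j i)) 0"
    by (rule isCont_UNIV, rule det_cont) (use A B mat_delete_carrier in auto)
  have c2: "isCont (\<lambda>r. det (A + r \<cdot>\<^sub>m B)) 0"
    by (rule isCont_UNIV, rule det_cont[OF A B])
  show ?thesis unfolding eq
    by (intro continuous_intros c1 c2) (use d A0 in auto)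
qed

lemma trace_inv_cont: fixes A B X :: "real mat"
  assumes A: "A \<in> carrier_mat n n" and B: "B \<in> carrier_mat n n" and d: "det A \<noteq> 0"
    and X: "X \<in> carrier_mat n n"
  shows "isCont (\<lambda>r. mtrace (inv' (A + r \<cdot>\<^sub>m B) * X)) 0"
proof -
  have C: "inv' (A + r \<cdot>\<^sub>m B) \<in> carrier_mat n n" for r using A B by auto
  show ?thesis unfolding mtrace_mult[OF C X]
    by (intro continuous_intros inv_entry_cont[OF A B d]) auto
qed

lemma inv_diff: fixes A P :: "real mat"
  assumes A: "A \<in> carrier_mat n n" and P: "P \<in> carrier_mat n n" and dA: "det A \<noteq> 0" and dP: "det P \<noteq> 0"
  shows "inv' P - inv' A = inv' P * ((A - P) * inv' A)"
proof -
  have iA: "inv' A \<in> carrier_mat n n" and iP: "inv' P \<in> carrier_mat n n" using A P by auto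
  have "inv' P * ((A - P) * inv' A) = inv' P * (A * inv' A - P * inv' A)"
    by (subst minus_mult_distrib_mat[OF A P iA]) simp
  also have "\<dots> = inv' P * (A * inv' A) - inv' P * (P * inv' A)"
    using A P iA iP by (simp add: mminus_r)
  also have "inv' P * (P * inv' A) = (inv' P * P) * inv' A" using A P iA iP by (simp add: massoc)
  also have "\<dots> = inv' A" using inv'_left[OF P dP] carrier_matD[OF iA] by simp
  also have "A * inv' A = 1\<^sub>m n" using inv'_right[OF A dA] .
  finally show ?thesis using carrier_matD[OF iP] by simp
qed

lemma trace_inv_deriv: fixes A B C :: "real mat"
  assumes A: "A \<in> carrier_mat n n" and B: "B \<in> carrier_mat n n" and d: "det A \<noteq> 0"
    and C: "C \<in> carrier_mat n n"
  shows "((\<lambda>r. mtrace (inv' (A + r \<cdot>\<^sub>m B) * C)) has_real_derivative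
           - mtrace (inv' A * B * inv' A * C)) (at 0)"
proof -
  have A0: "A + 0 \<cdot>\<^sub>m B = A" using A B by (auto intro!: eq_matI)
  have iA: "inv' A \<in> carrier_mat n n" using A by simp
  let ?X = "B * (inv' A * C)"
  have X: "?X \<in> carrier_mat n n" using B iA C by auto
  have lim: "((\<lambda>r. - mtrace (inv' (A + r \<cdot>\<^sub>m B) * ?X)) \<longlongrightarrow> - mtrace (inv' A * ?X)) (at 0)"
    using trace_inv_cont[OF A B d X] A0 unfolding isCont_def by (auto intro!: tendsto_intros)
  have ev: "\<forall>\<^sub>F r in at 0. det (A + r \<cdot>\<^sub>m B) \<noteq> 0"
  proof -
    have "((\<lambda>r. det (A + r \<cdot>\<^sub>m B)) \<longlongrightarrow> det A) (at 0)"
      using isCont_UNIV[OF det_cont[OF A B], of 0] A0 unfolding isCont_def by simp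
    thus ?thesis using d tendsto_imp_eventually_ne by blast
  qed
  have ev2: "\<forall>\<^sub>F r in at 0. - mtrace (inv' (A + r \<cdot>\<^sub>m B) * ?X) =
     (mtrace (inv' (A + r \<cdot>\<^sub>m B) * C) - mtrace (inv' (A + 0 \<cdot>\<^sub>m B) * C)) / (r - 0)"
    using ev eventually_neq_at_within[of 0 0 UNIV]
  proof (eventually_elim)
    case (elim r)
    let ?P = "A + r \<cdot>\<^sub>m B"
    have P: "?P \<in> carrier_mat n n" using A B by auto
    have iP: "inv' ?P \<in> carrier_mat n n" using P by simp
    have AP: "A - ?P = (-r) \<cdot>\<^sub>m B" using A B by (auto intro!: eq_matI)
    have "mtrace (inv' ?P * C) - mtrace (inv' A * C) = mtrace ((inv' ?P - inv' A) * C)"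
      using iP iA C by (simp add: minus_mult_distrib_mat[OF iP iA C] mtrace_minus[of _ n])
    also have "\<dots> = mtrace ((inv' ?P * (((-r) \<cdot>\<^sub>m B) * inv' A)) * C)"
      unfolding inv_diff[OF A P d elim(1)] AP ..
    also have "\<dots> = mtrace ((-r) \<cdot>\<^sub>m (inv' ?P * ?X))"
      using carrier_matD[OF A] carrier_matD[OF B] carrier_matD[OF C] by (simp add: malg)
    also have "\<dots> = - r * mtrace (inv' ?P * ?X)"
      by (rule mtrace_smult[of _ n]) (use iP X in auto)
    finally show ?case using elim(2) A0 by (simp add: field_simps)
  qed
  have "((\<lambda>r. mtrace (inv' (A + r \<cdot>\<^sub>m B) * C)) has_real_derivative - mtrace (inv' A * ?X)) (at 0)"
    unfolding has_field_derivative_iff using Lim_transform_eventually[OF lim ev2] .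
  moreover have "inv' A * B * inv' A * C = inv' A * ?X"
    using carrier_matD[OF A] carrier_matD[OF B] carrier_matD[OF C] by (simp add: massoc)
  ultimately show ?thesis by simp
qed



lemma add0: "A \<in> carrier_mat n m \<Longrightarrow> B \<in> carrier_mat n m \<Longrightarrow> A + (0::real) \<cdot>\<^sub>m B = A"
  by (auto intro!: eq_matI)

lemma ev_pos_nhds: fixes f :: "real \<Rightarrow> real"
  assumes "isCont f 0" "f 0 > 0" shows "\<forall>\<^sub>F r in nhds 0. f r > 0"
proof -
  have "(f \<longlongrightarrow> f 0) (at 0)" using assms(1) unfolding isCont_def .
  hence "\<forall>\<^sub>F r in at 0. f r > 0" using assms(2) order_tendstoD(1) by blast
  thus ?thesis using assms(2) unfolding eventually_nhds_conv_at by auto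
qed

lemma good_line:
  fixes M :: "nat \<Rightarrow> (nat \<Rightarrow> real) \<Rightarrow> real mat" and Bm :: "nat \<Rightarrow> nat \<Rightarrow> real mat"
  assumes fin: "finite S"
  and carM: "\<And>k z. k \<in> S \<Longrightarrow> M k z \<in> carrier_mat (nk k) (nk k)"
  and carB: "\<And>k i. k \<in> S \<Longrightarrow> Bm k i \<in> carrier_mat (nk k) (nk k)"
  and aff: "\<And>k z i s. k \<in> S \<Longrightarrow> M k (z(i := z i + s)) = M k z + s \<cdot>\<^sub>m Bm k i"
  and good: "\<forall>k\<in>S. det (M k z) > 0"
  shows "\<forall>\<^sub>F s in nhds 0. \<forall>k\<in>S. det (M k (z(i := z i + s))) > 0"
proof (rule eventually_ball_finite[OF fin], intro ballI)
  fix k assume k: "k \<in> S"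
  have A0: "M k z + 0 \<cdot>\<^sub>m Bm k i = M k z" using add0[OF carM[OF k] carB[OF k]] .
  have "\<forall>\<^sub>F s in nhds 0. det (M k z + s \<cdot>\<^sub>m Bm k i) > 0"
    by (rule ev_pos_nhds, rule isCont_UNIV, rule det_cont[OF carM[OF k] carB[OF k]])
       (use A0 good k in auto)
  thus "\<forall>\<^sub>F s in nhds 0. det (M k (z(i := z i + s))) > 0" using aff[OF k] by simp
qed

lemma partial_formula:
  fixes g :: "(nat \<Rightarrow> real) \<Rightarrow> real" and M :: "nat \<Rightarrow> (nat \<Rightarrow> real) \<Rightarrow> real mat"
    and Bm :: "nat \<Rightarrow> nat \<Rightarrow> real mat"
  assumes fin: "finite S"
  and carM: "\<And>k z. k \<in> S \<Longrightarrow> M k z \<in> carrier_mat (nk k) (nk k)"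
  and carB: "\<And>k i. k \<in> S \<Longrightarrow> Bm k i \<in> carrier_mat (nk k) (nk k)"
  and aff: "\<And>k z i s. k \<in> S \<Longrightarrow> M k (z(i := z i + s)) = M k z + s \<cdot>\<^sub>m Bm k i"
  and geq: "\<And>z. (\<forall>k\<in>S. det (M k z) > 0) \<Longrightarrow> g z = c0 + (\<Sum>k\<in>S. c k * ln (det (M k z)))"
  and good: "\<forall>k\<in>S. det (M k z) > 0"
  shows "partial g i z = (\<Sum>k\<in>S. c k * mtrace (inv' (M k z) * Bm k i))"
proof -
  have ev: "\<forall>\<^sub>F s in nhds 0. g (z(i := z i + s)) = c0 + (\<Sum>k\<in>S. c k * ln (det (M k z + s \<cdot>\<^sub>m Bm k i)))"
  proof (rule eventually_mono[OF good_line[where z=z and i=i, OF fin carM carB aff good]])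
    fix s assume h: "\<forall>k\<in>S. 0 < det (M k (z(i := z i + s)))"
    have "g (z(i := z i + s)) = c0 + (\<Sum>k\<in>S. c k * ln (det (M k (z(i := z i + s)))))"
      by (rule geq[OF h])
    also have "\<dots> = c0 + (\<Sum>k\<in>S. c k * ln (det (M k z + s \<cdot>\<^sub>m Bm k i)))"
      by (intro arg_cong[where f = "\<lambda>x. c0 + x"] sum.cong refl) (simp add: aff)
    finally show "g (z(i := z i + s)) = c0 + (\<Sum>k\<in>S. c k * ln (det (M k z + s \<cdot>\<^sub>m Bm k i)))" .
  qed
  have D: "((\<lambda>s. c0 + (\<Sum>k\<in>S. c k * ln (det (M k z + s \<cdot>\<^sub>m Bm k i)))) has_real_derivative
      0 + (\<Sum>k\<in>S. c k * mtrace (inv' (M k z) * Bm k i))) (at 0)"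
  proof (intro DERIV_add DERIV_const DERIV_sum DERIV_cmult)
    fix k assume k: "k \<in> S"
    show "((\<lambda>s. ln (det (M k z + s \<cdot>\<^sub>m Bm k i))) has_real_derivative mtrace (inv' (M k z) * Bm k i)) (at 0)"
      by (rule lndet_deriv[OF carM[OF k] carB[OF k]]) (use good k in auto)
  qed
  have "((\<lambda>s. g (z(i := z i + s))) has_real_derivative (\<Sum>k\<in>S. c k * mtrace (inv' (M k z) * Bm k i))) (at 0)"
    using D DERIV_cong_ev[OF refl ev refl] by simp
  thus ?thesis unfolding partial_def by (rule DERIV_imp_deriv)
qed

lemma hess_formula:
  fixes g :: "(nat \<Rightarrow> real) \<Rightarrow> real" and M :: "nat \<Rightarrow> (nat \<Rightarrow> real) \<Rightarrow> real mat"
    and Bm :: "nat \<Rightarrow> nat \<Rightarrow> real mat"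
  assumes fin: "finite S"
  and carM: "\<And>k z. k \<in> S \<Longrightarrow> M k z \<in> carrier_mat (nk k) (nk k)"
  and carB: "\<And>k i. k \<in> S \<Longrightarrow> Bm k i \<in> carrier_mat (nk k) (nk k)"
  and aff: "\<And>k z i s. k \<in> S \<Longrightarrow> M k (z(i := z i + s)) = M k z + s \<cdot>\<^sub>m Bm k i"
  and geq: "\<And>z. (\<forall>k\<in>S. det (M k z) > 0) \<Longrightarrow> g z = c0 + (\<Sum>k\<in>S. c k * ln (det (M k z)))"
  and good: "\<forall>k\<in>S. det (M k x) > 0"
  shows "partial (\<lambda>z. partial g i z) j x =
     - (\<Sum>k\<in>S. c k * mtrace (inv' (M k x) * Bm k j * inv' (M k x) * Bm k i))"
proof -
  have ev: "\<forall>\<^sub>F r in nhds 0. partial g i (x(j := x j + r)) =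
       (\<Sum>k\<in>S. c k * mtrace (inv' (M k x + r \<cdot>\<^sub>m Bm k j) * Bm k i))"
  proof (rule eventually_mono[OF good_line[where z=x and i=j, OF fin carM carB aff good]])
    fix r assume elim: "\<forall>k\<in>S. 0 < det (M k (x(j := x j + r)))"
    show "partial g i (x(j := x j + r)) =
       (\<Sum>k\<in>S. c k * mtrace (inv' (M k x + r \<cdot>\<^sub>m Bm k j) * Bm k i))"
      by (subst partial_formula[OF fin carM carB aff geq elim])
         (auto simp: aff)
  qed
  have D: "((\<lambda>r. (\<Sum>k\<in>S. c k * mtrace (inv' (M k x + r \<cdot>\<^sub>m Bm k j) * Bm k i))) has_real_derivative
      (\<Sum>k\<in>S. c k * (- mtrace (inv' (M k x) * Bm k j * inv' (M k x) * Bm k i)))) (at 0)"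
  proof (intro DERIV_sum DERIV_cmult)
    fix k assume k: "k \<in> S"
    show "((\<lambda>r. mtrace (inv' (M k x + r \<cdot>\<^sub>m Bm k j) * Bm k i)) has_real_derivative
      (- mtrace (inv' (M k x) * Bm k j * inv' (M k x) * Bm k i))) (at 0)"
      by (rule trace_inv_deriv[OF carM[OF k] carB[OF k] _ carB[OF k]]) (use good k in auto)
  qed
  have "((\<lambda>r. partial g i (x(j := x j + r))) has_real_derivative
      (\<Sum>k\<in>S. c k * (- mtrace (inv' (M k x) * Bm k j * inv' (M k x) * Bm k i)))) (at 0)"
    using D DERIV_cong_ev[OF refl ev refl] by simp
  hence "partial (\<lambda>z. partial g i z) j x =
      (\<Sum>k\<in>S. c k * (- mtrace (inv' (M k x) * Bm k j * inv' (M k x) * Bm k i)))"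
    unfolding partial_def[of "\<lambda>z. partial g i z"] by (rule DERIV_imp_deriv)
  thus ?thesis by (simp add: sum_negf)
qed



definition qf :: "nat \<Rightarrow> (nat \<Rightarrow> nat \<Rightarrow> real) \<Rightarrow> (nat \<Rightarrow> real) \<Rightarrow> real" where
  "qf n P v = (\<Sum>a<n. \<Sum>b<n. v a * P a b * v b)"

lemma sum_delta_r: fixes k n :: nat shows "k < n \<Longrightarrow> (\<Sum>b<n. f b * (if b = k then 1 else 0)) = (f k :: real)"
  by (simp add: if_distrib[of "\<lambda>x. _ * x"] sum.delta cong: if_cong)

lemma sum_delta_l: fixes k n :: nat shows "k < n \<Longrightarrow> (\<Sum>b<n. (if b = k then 1 else 0) * f b) = (f k :: real)"
  by (simp add: if_distrib[of "\<lambda>x. x * _"] sum.delta cong: if_cong)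

lemma qf_shift:
  fixes P :: "nat \<Rightarrow> nat \<Rightarrow> real" and v :: "nat \<Rightarrow> real" and c :: real
  assumes k: "k < n"
  shows "qf n P (\<lambda>a. v a + c * (if a = k then 1 else 0)) =
     qf n P v + c * (\<Sum>b<n. P k b * v b) + c * (\<Sum>a<n. v a * P a k) + c * c * P k k"
proof -
  have "qf n P (\<lambda>a. v a + c * (if a = k then 1 else 0)) =
     (\<Sum>a<n. \<Sum>b<n. v a * P a b * v b) + (\<Sum>a<n. \<Sum>b<n. v a * P a b * (c * (if b = k then 1 else 0)))
     + (\<Sum>a<n. \<Sum>b<n. (c * (if a = k then 1 else 0)) * P a b * v b)
     + (\<Sum>a<n. \<Sum>b<n. (c * (if a = k then 1 else 0)) * P a b * (c * (if b = k then 1 else 0)))"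
    unfolding qf_def by (simp add: algebra_simps sum.distrib)
  also have "(\<Sum>a<n. \<Sum>b<n. v a * P a b * (c * (if b = k then 1 else 0))) = c * (\<Sum>a<n. v a * P a k)"
  proof -
    have "(\<Sum>a<n. \<Sum>b<n. v a * P a b * (c * (if b = k then 1 else 0))) =
          (\<Sum>a<n. \<Sum>b<n. (c * v a * P a b) * (if b = k then 1 else 0))"
      by (simp add: algebra_simps)
    also have "\<dots> = (\<Sum>a<n. c * v a * P a k)" using sum_delta_r[OF k] by simp
    finally show ?thesis by (simp add: sum_distrib_left algebra_simps)
  qed
  also have "(\<Sum>a<n. \<Sum>b<n. (c * (if a = k then 1 else 0)) * P a b * v b) = c * (\<Sum>b<n. P k b * v b)"
  proof -
    have "(\<Sum>a<n. \<Sum>b<n. (c * (if a = k then 1 else 0)) * P a b * v b) =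
          (\<Sum>a<n. (if a = k then 1 else 0) * (\<Sum>b<n. c * P a b * v b))"
      by (simp add: sum_distrib_left algebra_simps)
    also have "\<dots> = (\<Sum>b<n. c * P k b * v b)" using sum_delta_l[OF k] by simp
    finally show ?thesis by (simp add: sum_distrib_left algebra_simps)
  qed
  also have "(\<Sum>a<n. \<Sum>b<n. (c * (if a = k then 1 else 0)) * P a b * (c * (if b = k then 1 else 0))) = c * c * P k k"
  proof -
    have "(\<Sum>a<n. \<Sum>b<n. (c * (if a = k then 1 else 0)) * P a b * (c * (if b = k then 1 else 0))) =
          (\<Sum>a<n. (if a = k then 1 else 0) * (\<Sum>b<n. (c * c * P a b) * (if b = k then 1 else 0)))"
      by (simp add: sum_distrib_left algebra_simps)
    also have "\<dots> = (\<Sum>a<n. (if a = k then 1 else 0) * (c * c * P a k))" using sum_delta_r[OF k] by simp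
    also have "\<dots> = c * c * P k k" using sum_delta_l[OF k] by simp
    finally show ?thesis .
  qed
  finally show ?thesis unfolding qf_def by simp
qed

lemma rank1:
  fixes P :: "nat \<Rightarrow> nat \<Rightarrow> real"
  shows "k \<le> n \<Longrightarrow> (\<forall>a<n. \<forall>b<n. P a b = P b a) \<Longrightarrow>
    (\<forall>a<n. \<forall>b<n. (a < k \<or> b < k) \<longrightarrow> P a b = 0) \<Longrightarrow>
    (\<forall>v. (\<exists>a<n. v a \<noteq> 0) \<and> (\<forall>a<k. v a = 0) \<longrightarrow> qf n P v > 0) \<Longrightarrow>
    \<exists>u. \<forall>a<n. \<forall>b<n. P a b = (\<Sum>l\<in>{k..<n}. u l a * u l b)"
proof (induction "n - k" arbitrary: k P)
  case 0
  hence "k = n" by simp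
  thus ?case using 0 by auto
next
  case (Suc m)
  hence k: "k < n" by simp
  note sym = Suc.prems(2) and zero = Suc.prems(3) and pd = Suc.prems(4)
  define p where "p = P k k"
  have "qf n P (\<lambda>a. if a = k then 1 else 0) > 0" using pd k by (intro pd[rule_format]) auto
  hence pp: "p > 0" unfolding qf_def p_def using k
    by (simp add: if_distrib[of "\<lambda>x. x * _"] if_distrib[of "\<lambda>x. _ * x"] cong: if_cong)
  define u0 where "u0 a = P a k / sqrt p" for a
  define P' where "P' a b = P a b - u0 a * u0 b" for a b
  have uu: "u0 a * u0 b = P a k * P b k / p" for a b
    unfolding u0_def using pp by (simp add: field_simps)
  have IH: "\<exists>u. \<forall>a<n. \<forall>b<n. P' a b = (\<Sum>l\<in>{Suc k..<n}. u l a * u l b)"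
  proof (rule Suc.hyps(1))
    show "m = n - Suc k" using Suc.hyps(2) by simp
    show "Suc k \<le> n" using k by simp
    show "\<forall>a<n. \<forall>b<n. P' a b = P' b a" unfolding P'_def using sym by (simp add: mult.commute)
    show "\<forall>a<n. \<forall>b<n. (a < Suc k \<or> b < Suc k) \<longrightarrow> P' a b = 0"
    proof (intro allI impI)
      fix a b assume ab: "a < n" "b < n" "a < Suc k \<or> b < Suc k"
      show "P' a b = 0"
      proof (cases "a < k \<or> b < k")
        case True
        hence "P a b = 0" "P a k = 0 \<or> P b k = 0" using zero ab k sym by auto
        thus ?thesis unfolding P'_def uu by auto
      next
        case False
        hence "a = k \<or> b = k" using ab by auto
        thus ?thesis unfolding P'_def uu p_def using pp sym ab k p_def by (auto simp: field_simps)
      qed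
    qed
    show "\<forall>v. (\<exists>a<n. v a \<noteq> 0) \<and> (\<forall>a<Suc k. v a = 0) \<longrightarrow> 0 < qf n P' v"
    proof (intro allI impI)
      fix v :: "nat \<Rightarrow> real" assume v: "(\<exists>a<n. v a \<noteq> 0) \<and> (\<forall>a<Suc k. v a = 0)"
      define s where "s = (\<Sum>b<n. P k b * v b)"
      have s2: "(\<Sum>a<n. v a * P a k) = s" unfolding s_def using sym k
        by (intro sum.cong) (auto simp: mult.commute)
      define w where "w a = v a + (- s / p) * (if a = k then 1 else 0)" for a
      have "qf n P w > 0"
      proof (rule pd[rule_format], intro conjI)
        obtain a where a: "a < n" "v a \<noteq> 0" using v by auto
        hence "a \<noteq> k" using v by auto
        thus "\<exists>a<n. w a \<noteq> 0" using a unfolding w_def by auto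
        show "\<forall>a<k. w a = 0" using v unfolding w_def by auto
      qed
      also have "qf n P w = qf n P v - s * s / p"
        unfolding w_def qf_shift[OF k] s2 s_def[symmetric] p_def[symmetric] using pp
        by (simp add: field_simps)
      also have "qf n P v - s * s / p = qf n P' v"
      proof -
        have "qf n P' v = qf n P v - (\<Sum>a<n. \<Sum>b<n. (v a * P a k) * (v b * P b k) / p)"
          unfolding qf_def P'_def uu by (simp add: algebra_simps sum_subtractf)
        also have "(\<Sum>a<n. \<Sum>b<n. (v a * P a k) * (v b * P b k) / p) = s * s / p"
          unfolding s2[symmetric] sum_product sum_divide_distrib by simp
        finally show ?thesis by simp
      qed
      finally show "0 < qf n P' v" .
    qed
  qed
  then obtain u' where u': "\<forall>a<n. \<forall>b<n. P' a b = (\<Sum>l\<in>{Suc k..<n}. u' l a * u' l b)" by blast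
  show ?case
  proof (intro exI allI impI)
    fix a b assume ab: "a < n" "b < n"
    let ?u = "u'(k := u0)"
    have "(\<Sum>l\<in>{k..<n}. ?u l a * ?u l b) = ?u k a * ?u k b + (\<Sum>l\<in>{Suc k..<n}. ?u l a * ?u l b)"
      by (rule sum.atLeast_Suc_lessThan[OF k])
    also have "(\<Sum>l\<in>{Suc k..<n}. ?u l a * ?u l b) = (\<Sum>l\<in>{Suc k..<n}. u' l a * u' l b)"
      by (intro sum.cong) auto
    also have "\<dots> = P' a b" using u' ab by simp
    finally show "P a b = (\<Sum>l\<in>{k..<n}. ?u l a * ?u l b)" unfolding P'_def by simp
  qed
qed



definition pdn :: "nat \<Rightarrow> real mat \<Rightarrow> bool" where
  "pdn n P \<longleftrightarrow> P \<in> carrier_mat n n \<and> (\<forall>w\<in>carrier_vec n. w \<noteq> 0\<^sub>v n \<longrightarrow> w \<bullet> (P *\<^sub>v w) > 0)"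

definition psd :: "nat \<Rightarrow> real mat \<Rightarrow> bool" where
  "psd n P \<longleftrightarrow> P \<in> carrier_mat n n \<and> (\<forall>w\<in>carrier_vec n. w \<bullet> (P *\<^sub>v w) \<ge> 0)"

lemma pos_def_pdn: "pos_def n P \<Longrightarrow> pdn n P"
  unfolding pos_def_def pdn_def by auto

lemma pos_def_sym: "pos_def n P \<Longrightarrow> transpose_mat P = P"
  unfolding pos_def_def by auto

lemma pdn_psd: "pdn n P \<Longrightarrow> psd n P"
proof -
  assume a: "pdn n P"
  have "w \<bullet> (P *\<^sub>v w) \<ge> 0" if w: "w \<in> carrier_vec n" for w
  proof (cases "w = 0\<^sub>v n")
    case True
    thus ?thesis using a unfolding pdn_def by auto
  next
    case False
    thus ?thesis using a w unfolding pdn_def by (auto intro: less_imp_le)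
  qed
  thus ?thesis using a unfolding pdn_def psd_def by auto
qed

lemma vtrans: fixes A :: "real mat"
  assumes A: "A \<in> carrier_mat n m" and w: "w \<in> carrier_vec n" and y: "y \<in> carrier_vec m"
  shows "w \<bullet> (A *\<^sub>v y) = (transpose_mat A *\<^sub>v w) \<bullet> y"
proof -
  have "transpose_mat A *\<^sub>v w = vec m (\<lambda>j. w \<bullet> col A j)"
    using A w by (auto intro!: eq_vecI comm_scalar_prod[of _ n])
  moreover have "A *\<^sub>v y = vec n (\<lambda>i. row A i \<bullet> y)" using A y by (auto intro!: eq_vecI)
  ultimately show ?thesis using assoc_scalar_prod[OF w A y] by simp
qed

lemma qf_vec: fixes P :: "real mat"
  assumes P: "P \<in> carrier_mat n n" and w: "w \<in> carrier_vec n"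
  shows "w \<bullet> (P *\<^sub>v w) = qf n (\<lambda>a b. P $$ (a,b)) (\<lambda>a. w $ a)"
  unfolding qf_def using P w
  by (auto simp: scalar_prod_def row_def sum_distrib_left atLeast0LessThan mult.assoc intro!: sum.cong)

lemma qf_cong: "(\<And>a. a < n \<Longrightarrow> v a = v' a) \<Longrightarrow> qf n P v = qf n P v'"
  unfolding qf_def by (auto intro!: sum.cong)

lemma chol: assumes P: "pos_def n P"
  shows "\<exists>U\<in>carrier_mat n n. P = U * transpose_mat U"
proof -
  have C: "P \<in> carrier_mat n n" using P unfolding pos_def_def by auto
  have sym: "\<forall>a<n. \<forall>b<n. P $$ (a,b) = P $$ (b,a)"
  proof (intro allI impI)
    fix a b assume ab: "a < n" "b < n"
    have "P $$ (a,b) = transpose_mat P $$ (a,b)" using pos_def_sym[OF P] by simp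
    also have "\<dots> = P $$ (b,a)" using ab C by auto
    finally show "P $$ (a,b) = P $$ (b,a)" .
  qed
  have pd: "\<forall>v. (\<exists>a<n. v a \<noteq> 0) \<and> (\<forall>a<0. v a = 0) \<longrightarrow> qf n (\<lambda>a b. P $$ (a,b)) v > 0"
  proof (intro allI impI)
    fix v :: "nat \<Rightarrow> real" assume "(\<exists>a<n. v a \<noteq> 0) \<and> (\<forall>a<0. v a = 0)"
    then obtain a where a: "a < n" "v a \<noteq> 0" by auto
    let ?w = "vec n v"
    have w: "?w \<in> carrier_vec n" by simp
    have "?w \<noteq> 0\<^sub>v n" using a by (metis index_vec index_zero_vec(1))
    hence "?w \<bullet> (P *\<^sub>v ?w) > 0" using P w unfolding pos_def_def by auto
    also have "?w \<bullet> (P *\<^sub>v ?w) = qf n (\<lambda>a b. P $$ (a,b)) v"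
      unfolding qf_vec[OF C w] by (rule qf_cong) simp
    finally show "qf n (\<lambda>a b. P $$ (a,b)) v > 0" .
  qed
  obtain u where u: "\<forall>a<n. \<forall>b<n. P $$ (a,b) = (\<Sum>l\<in>{0..<n}. u l a * u l b)"
    using rank1[of 0 n "\<lambda>a b. P $$ (a,b)", OF _ sym _ pd] by auto
  define U where "U = mat n n (\<lambda>(a,l). u l a)"
  have "P = U * transpose_mat U"
    using C u unfolding U_def by (auto intro!: eq_matI simp: scalar_prod_def row_def col_def)
  thus ?thesis unfolding U_def by auto
qed

lemma trace_QP_sum: fixes Q U :: "real mat"
  assumes Q: "Q \<in> carrier_mat n n" and U: "U \<in> carrier_mat n n"
  shows "mtrace (Q * (U * transpose_mat U)) = (\<Sum>l<n. col U l \<bullet> (Q *\<^sub>v col U l))"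
proof -
  have "mtrace (Q * (U * transpose_mat U)) = mtrace ((Q * U) * transpose_mat U)"
    using Q U by (simp add: assoc_mult_mat[of Q n n U n "transpose_mat U" n])
  also have "\<dots> = mtrace (transpose_mat U * (Q * U))"
    by (rule mtrace_comm[of _ n n]) (use Q U in auto)
  also have "\<dots> = (\<Sum>l<n. col U l \<bullet> (Q *\<^sub>v col U l))"
    unfolding mtrace_def using Q U by (auto intro!: sum.cong)
  finally show ?thesis .
qed

lemma trace_psd_pd: assumes P: "pos_def n P" and Q: "psd n Q"
  shows "mtrace (Q * P) \<ge> 0"
proof -
  obtain U where U: "U \<in> carrier_mat n n" "P = U * transpose_mat U" using chol[OF P] by auto
  have Qc: "Q \<in> carrier_mat n n" using Q unfolding psd_def by auto
  show ?thesis unfolding U(2) trace_QP_sum[OF Qc U(1)]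
    using Q U(1) unfolding psd_def by (intro sum_nonneg) auto
qed

lemma pdn_det_nz: assumes "pdn n P" shows "det P \<noteq> 0"
proof
  assume "det P = 0"
  then obtain v where v: "v \<in> carrier_vec n" "v \<noteq> 0\<^sub>v n" "P *\<^sub>v v = 0\<^sub>v n"
    using det_0_iff_vec_prod_zero[of P n] assms unfolding pdn_def by auto
  have "v \<bullet> (P *\<^sub>v v) > 0" using assms v unfolding pdn_def by auto
  thus False using v by simp
qed

lemma inv_unique_l: fixes A X :: "real mat"
  assumes A: "A \<in> carrier_mat n n" and d: "det A \<noteq> 0" and X: "X \<in> carrier_mat n n" and XA: "X * A = 1\<^sub>m n"
  shows "X = inv' A"
proof -
  have "X = X * (A * inv' A)" using inv'_right[OF A d] X by simp
  also have "\<dots> = (X * A) * inv' A" using X A by (simp add: assoc_mult_mat[of X n n A n "inv' A" n])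
  finally show ?thesis using XA A by simp
qed

lemma inv_unique_r: fixes A X :: "real mat"
  assumes A: "A \<in> carrier_mat n n" and d: "det A \<noteq> 0" and X: "X \<in> carrier_mat n n" and AX: "A * X = 1\<^sub>m n"
  shows "X = inv' A"
proof -
  have "X * A = 1\<^sub>m n" by (rule mat_mult_left_right_inverse[OF A X AX])
  thus ?thesis by (rule inv_unique_l[OF A d X])
qed

lemma inv_sym: fixes P :: "real mat"
  assumes P: "P \<in> carrier_mat n n" and d: "det P \<noteq> 0" and sym: "transpose_mat P = P"
  shows "transpose_mat (inv' P) = inv' P"
proof (rule inv_unique_l[OF P d])
  show "transpose_mat (inv' P) \<in> carrier_mat n n" using P by simp
  have "transpose_mat (inv' P) * P = transpose_mat (inv' P) * transpose_mat P" using sym by simp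
  also have "\<dots> = transpose_mat (P * inv' P)" using P by (simp add: transpose_mult[of P n n "inv' P" n])
  also have "\<dots> = 1\<^sub>m n" using inv'_right[OF P d] by simp
  finally show "transpose_mat (inv' P) * P = 1\<^sub>m n" .
qed

lemma inv_pos_def: assumes P: "pos_def n P" shows "pos_def n (inv' P)"
proof -
  have C: "P \<in> carrier_mat n n" using P unfolding pos_def_def by auto
  have d: "det P \<noteq> 0" using pdn_det_nz[OF pos_def_pdn[OF P]] .
  have iC: "inv' P \<in> carrier_mat n n" using C by simp
  have pd: "w \<bullet> (inv' P *\<^sub>v w) > 0" if w: "w \<in> carrier_vec n" "w \<noteq> 0\<^sub>v n" for w
  proof -
    let ?y = "inv' P *\<^sub>v w"
    have y: "?y \<in> carrier_vec n" using iC w by simp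
    have Py: "P *\<^sub>v ?y = w" using inv'_right[OF C d] C w iC
      by (simp add: assoc_mult_mat_vec[symmetric, of P n n "inv' P" n w])
    have "?y \<noteq> 0\<^sub>v n"
    proof
      assume "?y = 0\<^sub>v n"
      hence "w = P *\<^sub>v 0\<^sub>v n" using Py by simp
      also have "P *\<^sub>v 0\<^sub>v n = 0\<^sub>v n" using C by (auto intro!: eq_vecI simp: scalar_prod_def)
      finally show False using w by simp
    qed
    hence "?y \<bullet> (P *\<^sub>v ?y) > 0" using P y unfolding pos_def_def by auto
    also have "?y \<bullet> (P *\<^sub>v ?y) = w \<bullet> ?y" unfolding Py by (rule comm_scalar_prod[OF y w(1)])
    finally show ?thesis .
  qed
  show ?thesis unfolding pos_def_def using iC inv_sym[OF C d pos_def_sym[OF P]] pd by auto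
qed



lemma zero_mult_vec': "P \<in> carrier_mat n m \<Longrightarrow> P *\<^sub>v 0\<^sub>v m = 0\<^sub>v n"
  by (auto intro!: eq_vecI simp: scalar_prod_def)

lemma trace_sq: fixes P D :: "real mat"
  assumes P: "pos_def n P" and D: "D \<in> carrier_mat n n" and sym: "transpose_mat D = D"
  shows "mtrace (P * D * P * D) \<ge> 0" and "D \<noteq> 0\<^sub>m n n \<Longrightarrow> mtrace (P * D * P * D) > 0"
proof -
  have C: "P \<in> carrier_mat n n" using P unfolding pos_def_def by auto
  obtain U where U: "U \<in> carrier_mat n n" "P = U * transpose_mat U" using chol[OF P] by auto
  let ?Q = "D * P * D"
  have Q: "?Q \<in> carrier_mat n n" using C D by auto
  have "mtrace (P * D * P * D) = mtrace (P * ?Q)"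
    using carrier_matD[OF C] carrier_matD[OF D] by (simp add: massoc)
  also have "\<dots> = mtrace (?Q * P)" by (rule mtrace_comm[OF C Q])
  also have "\<dots> = (\<Sum>l<n. col U l \<bullet> (?Q *\<^sub>v col U l))" using trace_QP_sum[OF Q U(1), unfolded U(2)[symmetric]] .
  also have "\<dots> = (\<Sum>l<n. (D *\<^sub>v col U l) \<bullet> (P *\<^sub>v (D *\<^sub>v col U l)))"
  proof (rule sum.cong[OF refl])
    fix l assume l: "l \<in> {..<n}"
    have c: "col U l \<in> carrier_vec n" using U by auto
    have "?Q *\<^sub>v col U l = D *\<^sub>v (P *\<^sub>v (D *\<^sub>v col U l))"
    proof -
      have Dc: "D *\<^sub>v col U l \<in> carrier_vec n" using D c by auto
      have "?Q *\<^sub>v col U l = (D * P) *\<^sub>v (D *\<^sub>v col U l)"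
        by (rule assoc_mult_mat_vec[of "D * P" n n D n]) (use C D c in auto)
      also have "\<dots> = D *\<^sub>v (P *\<^sub>v (D *\<^sub>v col U l))"
        by (rule assoc_mult_mat_vec[of D n n P n]) (use C D Dc in auto)
      finally show ?thesis .
    qed
    hence "col U l \<bullet> (?Q *\<^sub>v col U l) = (transpose_mat D *\<^sub>v col U l) \<bullet> (P *\<^sub>v (D *\<^sub>v col U l))"
    proof -
      have "P *\<^sub>v (D *\<^sub>v col U l) \<in> carrier_vec n" using C D c by auto
      from vtrans[OF D c this] show ?thesis by (simp only: \<open>?Q *\<^sub>v col U l = D *\<^sub>v (P *\<^sub>v (D *\<^sub>v col U l))\<close>)
    qed
    thus "col U l \<bullet> (?Q *\<^sub>v col U l) = (D *\<^sub>v col U l) \<bullet> (P *\<^sub>v (D *\<^sub>v col U l))" using sym by simp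
  qed
  finally have eq: "mtrace (P * D * P * D) = (\<Sum>l<n. (D *\<^sub>v col U l) \<bullet> (P *\<^sub>v (D *\<^sub>v col U l)))" .
  have nn: "(D *\<^sub>v col U l) \<bullet> (P *\<^sub>v (D *\<^sub>v col U l)) \<ge> 0" for l
  proof -
    have "D *\<^sub>v col U l \<in> carrier_vec n" using D unfolding carrier_vec_def carrier_mat_def by simp
    thus ?thesis using pdn_psd[OF pos_def_pdn[OF P]] unfolding psd_def by auto
  qed
  show "mtrace (P * D * P * D) \<ge> 0" unfolding eq using nn by (intro sum_nonneg) auto
  assume Dn: "D \<noteq> 0\<^sub>m n n"
  show "mtrace (P * D * P * D) > 0"
  proof (rule ccontr)
    assume "\<not> mtrace (P * D * P * D) > 0"
    hence "(\<Sum>l<n. (D *\<^sub>v col U l) \<bullet> (P *\<^sub>v (D *\<^sub>v col U l))) = 0"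
      using \<open>mtrace (P * D * P * D) \<ge> 0\<close> unfolding eq by linarith
    moreover have "(\<Sum>l<n. (D *\<^sub>v col U l) \<bullet> (P *\<^sub>v (D *\<^sub>v col U l))) = 0 \<longleftrightarrow>
       (\<forall>l\<in>{..<n}. (D *\<^sub>v col U l) \<bullet> (P *\<^sub>v (D *\<^sub>v col U l)) = 0)"
      by (rule sum_nonneg_eq_0_iff) (simp_all add: nn)
    ultimately have z: "\<forall>l\<in>{..<n}. (D *\<^sub>v col U l) \<bullet> (P *\<^sub>v (D *\<^sub>v col U l)) = 0"
      by simp
    have Dz: "D *\<^sub>v col U l = 0\<^sub>v n" if l: "l < n" for l
    proof (rule ccontr)
      assume "D *\<^sub>v col U l \<noteq> 0\<^sub>v n"
      moreover have "D *\<^sub>v col U l \<in> carrier_vec n" using D unfolding carrier_vec_def carrier_mat_def by simp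
      ultimately have "(D *\<^sub>v col U l) \<bullet> (P *\<^sub>v (D *\<^sub>v col U l)) > 0"
        using pos_def_pdn[OF P] unfolding pdn_def by auto
      thus False using z l by auto
    qed
    have DU: "D * U = 0\<^sub>m n n"
    proof (rule eq_matI)
      fix i j assume ij: "i < dim_row (0\<^sub>m n n :: real mat)" "j < dim_col (0\<^sub>m n n :: real mat)"
      have "(D * U) $$ (i,j) = (D *\<^sub>v col U j) $ i" using ij D U by auto
      thus "(D * U) $$ (i,j) = 0\<^sub>m n n $$ (i,j)" using Dz ij by auto
    qed (use D U in auto)
    have d: "det P \<noteq> 0" using pdn_det_nz[OF pos_def_pdn[OF P]] .
    have "D = D * (P * inv' P)" using inv'_right[OF C d] carrier_matD[OF D] by simp
    also have "\<dots> = (D * U) * (transpose_mat U * inv' P)"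
      unfolding U(2) using carrier_matD[OF U(1)] carrier_matD[OF D] carrier_matD[OF C] by (simp add: massoc)
    also have "\<dots> = 0\<^sub>m n n" unfolding DU
      by (rule left_mult_zero_mat) (use U C in simp)
    finally show False using Dn by simp
  qed
qed

lemma qf_convex: fixes P :: "real mat" and v :: "nat \<Rightarrow> real"
  assumes P: "P \<in> carrier_mat n n"
  shows "qf n (\<lambda>a b. (1\<^sub>m n + s \<cdot>\<^sub>m (P - 1\<^sub>m n)) $$ (a,b)) v =
     (1 - s) * (\<Sum>a<n. v a * v a) + s * qf n (\<lambda>a b. P $$ (a,b)) v"
proof -
  have "qf n (\<lambda>a b. (1\<^sub>m n + s \<cdot>\<^sub>m (P - 1\<^sub>m n)) $$ (a,b)) v =
     (\<Sum>a<n. \<Sum>b<n. (1 - s) * ((if b = a then 1 else 0) * (v a * v b)) + s * (v a * P $$ (a,b) * v b))"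
    unfolding qf_def using P by (intro sum.cong refl) (auto simp: algebra_simps)
  also have "\<dots> = (1 - s) * (\<Sum>a<n. \<Sum>b<n. (if b = a then 1 else 0) * (v a * v b)) + s * qf n (\<lambda>a b. P $$ (a,b)) v"
    unfolding qf_def by (simp add: sum.distrib sum_distrib_left)
  also have "(\<Sum>a<n. \<Sum>b<n. (if b = a then 1 else 0) * (v a * v b)) = (\<Sum>a<n. v a * v a)"
    by (intro sum.cong refl) (simp add: sum_delta_l)
  finally show ?thesis .
qed

lemma pdn_det_pos: assumes P: "pdn n P" shows "det P > 0"
proof (rule ccontr)
  assume neg: "\<not> det P > 0"
  have C: "P \<in> carrier_mat n n" using P unfolding pdn_def by auto
  define f where "f = (\<lambda>s. det (1\<^sub>m n + s \<cdot>\<^sub>m (P - 1\<^sub>m n)))"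
  have "1\<^sub>m n + 0 \<cdot>\<^sub>m (P - 1\<^sub>m n) = 1\<^sub>m n" by (rule add0) (use C in auto)
  hence f0: "f 0 = 1" unfolding f_def by simp
  have f1: "f 1 = det P" unfolding f_def using C by (subgoal_tac "1\<^sub>m n + 1 \<cdot>\<^sub>m (P - 1\<^sub>m n) = P") (auto intro!: eq_matI)
  have cont: "\<forall>s. 0 \<le> s \<and> s \<le> 1 \<longrightarrow> isCont f s"
  proof -
    have "continuous_on UNIV f" unfolding f_def by (rule det_cont) (use C in auto)
    thus ?thesis using isCont_UNIV by blast
  qed
  obtain s where s: "0 \<le> s" "s \<le> 1" "f s = 0" using IVT2[of f 1 0 0] f0 f1 neg cont by auto
  have "pdn n (1\<^sub>m n + s \<cdot>\<^sub>m (P - 1\<^sub>m n))" unfolding pdn_def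
  proof (intro conjI ballI impI)
    show "1\<^sub>m n + s \<cdot>\<^sub>m (P - 1\<^sub>m n) \<in> carrier_mat n n" using C by auto
    fix w :: "real vec" assume w: "w \<in> carrier_vec n" "w \<noteq> 0\<^sub>v n"
    obtain a where a: "a < n" "w $ a \<noteq> 0" using w by (metis eq_vecI carrier_vecD index_zero_vec(1) index_zero_vec(2))
    have X: "(\<Sum>a<n. w $ a * w $ a) > 0"
    proof (rule sum_pos2[of _ a])
      show "0 < w $ a * w $ a" using a(2) by (metis not_real_square_gt_zero)
    qed (use a in auto)
    have "w \<bullet> (P *\<^sub>v w) > 0" using P w unfolding pdn_def by auto
    hence Y: "qf n (\<lambda>a b. P $$ (a,b)) (\<lambda>a. w $ a) > 0" unfolding qf_vec[OF C w(1)] .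
    have "w \<bullet> ((1\<^sub>m n + s \<cdot>\<^sub>m (P - 1\<^sub>m n)) *\<^sub>v w) =
        (1 - s) * (\<Sum>a<n. w $ a * w $ a) + s * qf n (\<lambda>a b. P $$ (a,b)) (\<lambda>a. w $ a)"
      by (subst qf_vec[OF _ w(1)]) (use C in \<open>auto simp: qf_convex[OF C]\<close>)
    also have "\<dots> > 0"
    proof (cases "s = 0")
      case True thus ?thesis using X by simp
    next
      case False
      hence "s * qf n (\<lambda>a b. P $$ (a,b)) (\<lambda>a. w $ a) > 0" using s Y by simp
      moreover have "(1 - s) * (\<Sum>a<n. w $ a * w $ a) \<ge> 0" using s X by simp
      ultimately show ?thesis by linarith
    qed
    finally show "w \<bullet> ((1\<^sub>m n + s \<cdot>\<^sub>m (P - 1\<^sub>m n)) *\<^sub>v w) > 0" .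
  qed
  hence "f s \<noteq> 0" unfolding f_def by (rule pdn_det_nz)
  thus False using s by simp
qed

lemma pdn_add_psd: assumes A: "pdn n A" and B: "psd n B" shows "pdn n (A + B)"
  unfolding pdn_def
proof (intro conjI ballI impI)
  have CA: "A \<in> carrier_mat n n" and CB: "B \<in> carrier_mat n n" using A B unfolding pdn_def psd_def by auto
  thus "A + B \<in> carrier_mat n n" by auto
  fix w :: "real vec" assume w: "w \<in> carrier_vec n" "w \<noteq> 0\<^sub>v n"
  have "w \<bullet> ((A + B) *\<^sub>v w) = w \<bullet> (A *\<^sub>v w) + w \<bullet> (B *\<^sub>v w)"
    using CA CB w by (simp add: add_mult_distrib_mat_vec[OF CA CB w(1)] scalar_prod_add_distrib[of _ n])
  moreover have "w \<bullet> (A *\<^sub>v w) > 0" using A w unfolding pdn_def by auto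
  moreover have "w \<bullet> (B *\<^sub>v w) \<ge> 0" using B w unfolding psd_def by auto
  ultimately show "w \<bullet> ((A + B) *\<^sub>v w) > 0" by linarith
qed

lemma psd_cong: fixes A G :: "real mat"
  assumes A: "psd m A" and G: "G \<in> carrier_mat m n"
  shows "psd n (transpose_mat G * A * G)"
  unfolding psd_def
proof (intro conjI ballI)
  have CA: "A \<in> carrier_mat m m" using A unfolding psd_def by auto
  thus "transpose_mat G * A * G \<in> carrier_mat n n" using G by auto
  fix w :: "real vec" assume w: "w \<in> carrier_vec n"
  have Gw: "G *\<^sub>v w \<in> carrier_vec m" using G w by auto
  have "w \<bullet> ((transpose_mat G * A * G) *\<^sub>v w) = w \<bullet> (transpose_mat G *\<^sub>v (A *\<^sub>v (G *\<^sub>v w)))"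
    using assoc_mult_mat_vec[of "transpose_mat G * A" n m G n w] assoc_mult_mat_vec[of "transpose_mat G" n m A m "G *\<^sub>v w"]
       CA G w by auto
  also have "\<dots> = (G *\<^sub>v w) \<bullet> (A *\<^sub>v (G *\<^sub>v w))"
    using vtrans[of "transpose_mat G" n m w "A *\<^sub>v (G *\<^sub>v w)"] G w CA by simp
  finally show "w \<bullet> ((transpose_mat G * A * G) *\<^sub>v w) \<ge> 0" using A Gw unfolding psd_def by simp
qed

lemma lin_tr: fixes W :: "real mat" and B :: "nat \<Rightarrow> real mat"
  assumes W: "W \<in> carrier_mat n n" and B: "\<And>i. i < d \<Longrightarrow> B i \<in> carrier_mat n n"
  shows "(\<Sum>i<d. v i * mtrace (B i * W)) = mtrace (mat n n (\<lambda>(a,b). \<Sum>i<d. v i * B i $$ (a,b)) * W)"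
proof -
  have "(\<Sum>i<d. v i * mtrace (B i * W)) = (\<Sum>i<d. \<Sum>a<n. \<Sum>c<n. v i * B i $$ (a,c) * W $$ (c,a))"
    using B W by (auto simp: mtrace_mult[of _ n n] sum_distrib_left mult.assoc intro!: sum.cong)
  also have "\<dots> = (\<Sum>a<n. \<Sum>c<n. \<Sum>i<d. v i * B i $$ (a,c) * W $$ (c,a))"
    by (subst sum.swap) (simp add: sum.swap[of _ "{..<d}"])
  also have "\<dots> = mtrace (mat n n (\<lambda>(a,b). \<Sum>i<d. v i * B i $$ (a,b)) * W)"
    using W by (subst mtrace_mult[of _ n n]) (auto simp: sum_distrib_right intro!: sum.cong)
  finally show ?thesis .
qed

lemma bilin_tr: fixes Y :: "real mat" and B :: "nat \<Rightarrow> real mat" and v :: "nat \<Rightarrow> real"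
  assumes Y: "Y \<in> carrier_mat n n" and B: "\<And>i. i < d \<Longrightarrow> B i \<in> carrier_mat n n"
  defines "Bv \<equiv> mat n n (\<lambda>(a,b). \<Sum>i<d. v i * B i $$ (a,b))"
  shows "(\<Sum>i<d. \<Sum>j<d. v i * v j * mtrace (Y * B j * Y * B i)) = mtrace (Y * Bv * Y * Bv)"
proof -
  have Bv: "Bv \<in> carrier_mat n n" unfolding Bv_def by auto
  have "(\<Sum>i<d. \<Sum>j<d. v i * v j * mtrace (Y * B j * Y * B i)) =
        (\<Sum>j<d. v j * (\<Sum>i<d. v i * mtrace (B i * (Y * B j * Y))))"
  proof -
    have "mtrace (Y * B j * Y * B i) = mtrace (B i * (Y * B j * Y))" if "i < d" "j < d" for i j
      by (rule mtrace_comm[of _ n n]) (use Y B that in auto)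
    hence "(\<Sum>i<d. \<Sum>j<d. v i * v j * mtrace (Y * B j * Y * B i)) =
        (\<Sum>i<d. \<Sum>j<d. v j * (v i * mtrace (B i * (Y * B j * Y))))"
      by (auto intro!: sum.cong simp: algebra_simps)
    also have "\<dots> = (\<Sum>j<d. v j * (\<Sum>i<d. v i * mtrace (B i * (Y * B j * Y))))"
      by (subst sum.swap) (simp add: sum_distrib_left)
    finally show ?thesis .
  qed
  also have "\<dots> = (\<Sum>j<d. v j * mtrace (Bv * (Y * B j * Y)))"
    unfolding Bv_def by (intro sum.cong refl arg_cong[where f = "\<lambda>x. _ * x"] lin_tr) (use Y B in auto)
  also have "\<dots> = (\<Sum>j<d. v j * mtrace (B j * (Y * Bv * Y)))"
  proof (intro sum.cong refl arg_cong[where f = "\<lambda>x. _ * x"])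
    fix j assume j: "j \<in> {..<d}"
    have Bj: "B j \<in> carrier_mat n n" using B j by auto
    have "mtrace (Bv * (Y * B j * Y)) = mtrace ((Bv * Y * B j) * Y)"
      using carrier_matD[OF Bv] carrier_matD[OF Y] carrier_matD[OF Bj] by (simp add: massoc)
    also have "\<dots> = mtrace (Y * (Bv * Y * B j))" by (rule mtrace_comm[of _ n n]) (use Y Bj Bv in auto)
    also have "\<dots> = mtrace ((Y * Bv * Y) * B j)"
      using carrier_matD[OF Bv] carrier_matD[OF Y] carrier_matD[OF Bj] by (simp add: massoc)
    also have "\<dots> = mtrace (B j * (Y * Bv * Y))" by (rule mtrace_comm[of _ n n]) (use Y Bj Bv in auto)
    finally show "mtrace (Bv * (Y * B j * Y)) = mtrace (B j * (Y * Bv * Y))" .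
  qed
  also have "\<dots> = mtrace (Bv * (Y * Bv * Y))"
    unfolding Bv_def by (intro lin_tr) (use Y B in auto)
  also have "\<dots> = mtrace (Y * Bv * Y * Bv)" by (rule mtrace_comm[of _ n n]) (use Y Bv in auto)
  finally show ?thesis .
qed

lemma det_from_qf: fixes H :: "real mat"
  assumes H: "H \<in> carrier_mat d d" and q: "\<And>w. w \<in> carrier_vec d \<Longrightarrow> w \<noteq> 0\<^sub>v d \<Longrightarrow> w \<bullet> (H *\<^sub>v w) \<noteq> 0"
  shows "det H \<noteq> 0"
proof
  assume "det H = 0"
  then obtain v where v: "v \<in> carrier_vec d" "v \<noteq> 0\<^sub>v d" "H *\<^sub>v v = 0\<^sub>v d"
    using det_0_iff_vec_prod_zero[OF H] by auto
  thus False using q[OF v(1,2)] by simp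
qed



lemma mtrace_minus': fixes A B :: "real mat"
  shows "dim_row A = dim_col A \<Longrightarrow> dim_row B = dim_row A \<Longrightarrow> dim_col B = dim_col A \<Longrightarrow>
    mtrace (A - B) = mtrace A - mtrace B"
  by (rule mtrace_minus[of _ "dim_row A"]) (auto intro!: carrier_matI)

lemma mtrace_add': fixes A B :: "real mat"
  shows "dim_row A = dim_col A \<Longrightarrow> dim_row B = dim_row A \<Longrightarrow> dim_col B = dim_col A \<Longrightarrow>
    mtrace (A + B) = mtrace A + mtrace B"
  by (rule mtrace_add[of _ "dim_row A"]) (auto intro!: carrier_matI)

lemma mtrace_rot: fixes A B :: "real mat"
  shows "dim_col A = dim_row B \<Longrightarrow> dim_col B = dim_row A \<Longrightarrow> mtrace (A * B) = mtrace (B * A)"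
  by (rule mtrace_comm[of _ "dim_row A" "dim_col A"]) (auto intro!: carrier_matI)

lemma tmult: fixes A B :: "real mat"
  shows "dim_col A = dim_row B \<Longrightarrow> transpose_mat (A * B) = transpose_mat B * transpose_mat A"
  by (rule transpose_mult[of _ "dim_row A" "dim_col A" _ "dim_col B"]) (auto intro!: carrier_matI)

lemma cancel1: fixes A Z :: "real mat"
  assumes A: "A \<in> carrier_mat n n" and d: "det A \<noteq> 0" and Z: "dim_row Z = n"
  shows "A * (inv' A * Z) = Z"
proof -
  have "A * (inv' A * Z) = (A * inv' A) * Z" using A Z by (simp add: massoc)
  also have "\<dots> = Z" using inv'_right[OF A d] Z by simp
  finally show ?thesis .
qed

lemma cancel2: fixes A Z :: "real mat"
  assumes A: "A \<in> carrier_mat n n" and d: "det A \<noteq> 0" and Z: "dim_row Z = n"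
  shows "inv' A * (A * Z) = Z"
proof -
  have "inv' A * (A * Z) = (inv' A * A) * Z" using A Z by (simp add: massoc)
  also have "\<dots> = Z" using inv'_left[OF A d] Z by simp
  finally show ?thesis .
qed

lemma tr_bilin_minus: fixes P X Y :: "real mat"
  assumes P: "P \<in> carrier_mat n n" and X: "X \<in> carrier_mat n n" and Y: "Y \<in> carrier_mat n n"
  shows "mtrace (P * (X - Y) * P * (X - Y)) =
     mtrace (P * X * P * X) - mtrace (P * X * P * Y) - mtrace (P * Y * P * X) + mtrace (P * Y * P * Y)"
proof -
  have d: "dim_row P = n" "dim_col P = n" "dim_row X = n" "dim_col X = n" "dim_row Y = n" "dim_col Y = n"
    using P X Y by auto
  have "P * (X - Y) * P * (X - Y) = (P * X * P * X - P * Y * P * X) - (P * X * P * Y - P * Y * P * Y)"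
    using d by (simp add: mminus_r mminus_l)
  thus ?thesis using d by (simp add: mtrace_minus')
qed

lemma tr_bilin_plus: fixes X K C :: "real mat"
  assumes X: "X \<in> carrier_mat n n" and K: "K \<in> carrier_mat n n" and C: "C \<in> carrier_mat n n"
  shows "mtrace (X * (K + C) * X * (K + C)) =
     mtrace (X * K * X * K) + mtrace (X * K * X * C) + mtrace (X * C * X * K) + mtrace (X * C * X * C)"
proof -
  have d: "dim_row X = n" "dim_col X = n" "dim_row K = n" "dim_col K = n" "dim_row C = n" "dim_col C = n"
    using X K C by auto
  have "X * (K + C) * X * (K + C) = (X * K * X * K + X * C * X * K) + (X * K * X * C + X * C * X * C)"
    using d by (simp add: madd_r madd_l)
  thus ?thesis using d by (simp add: mtrace_add')
qed



lemma pos_def_sym_inv: assumes "pos_def n P" shows "transpose_mat (inv' P) = inv' P"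
  using inv_pos_def[OF assms] unfolding pos_def_def by auto

lemma pos_def_carrier: "pos_def n P \<Longrightarrow> P \<in> carrier_mat n n"
  unfolding pos_def_def by auto

lemma pos_def_det: "pos_def n P \<Longrightarrow> det P \<noteq> 0"
  using pdn_det_nz[OF pos_def_pdn] .

lemma var_mono:
  fixes K H R B :: "real mat"
  assumes K: "pos_def n K" and R: "pos_def m R" and H: "H \<in> carrier_mat n m"
    and B: "B \<in> carrier_mat n n" and Bs: "transpose_mat B = B"
  defines "C \<equiv> H * R * transpose_mat H"
  shows "mtrace (inv' (K + C) * B * inv' (K + C) * B) \<le> mtrace (inv' K * B * inv' K * B)"
proof -
  have Kc: "K \<in> carrier_mat n n" and Rc: "R \<in> carrier_mat m m" using K R by (auto simp: pos_def_carrier)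
  have Cc: "C \<in> carrier_mat n n" unfolding C_def using H Rc by auto
  have Cpsd: "psd n C"
  proof -
    have "psd n (transpose_mat (transpose_mat H) * R * transpose_mat H)"
      by (rule psd_cong[OF pdn_psd[OF pos_def_pdn[OF R]]]) (use H in auto)
    thus ?thesis unfolding C_def by simp
  qed
  have Cs: "transpose_mat C = C"
  proof -
    have "transpose_mat C = transpose_mat (transpose_mat H) * (transpose_mat R * transpose_mat H)"
      unfolding C_def using H Rc by (simp add: tmult massoc)
    also have "\<dots> = C" unfolding C_def using H Rc pos_def_sym[OF R] by (simp add: massoc)
    finally show ?thesis .
  qed
  define \<Sigma> where "\<Sigma> = K + C"
  have \<Sigma>pd: "pos_def n \<Sigma>" unfolding pos_def_def \<Sigma>_def
  proof (intro conjI)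
    show "K + C \<in> carrier_mat n n" using Kc Cc by auto
    show "transpose_mat (K + C) = K + C" using transpose_add[OF Kc Cc] Cs pos_def_sym[OF K] by simp
    show "\<forall>v\<in>carrier_vec n. v \<noteq> 0\<^sub>v n \<longrightarrow> 0 < v \<bullet> ((K + C) *\<^sub>v v)"
      using pdn_add_psd[OF pos_def_pdn[OF K] Cpsd] unfolding pdn_def by auto
  qed
  have \<Sigma>c: "\<Sigma> \<in> carrier_mat n n" using Kc Cc unfolding \<Sigma>_def by auto
  define Sa where "Sa = inv' \<Sigma>"
  define Sk where "Sk = inv' K"
  have dK: "det K \<noteq> 0" and d\<Sigma>: "det \<Sigma> \<noteq> 0" using pos_def_det K \<Sigma>pd by auto
  have Sac: "Sa \<in> carrier_mat n n" and Skc: "Sk \<in> carrier_mat n n" unfolding Sa_def Sk_def using \<Sigma>c Kc by auto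
  have Sas: "transpose_mat Sa = Sa" and Sks: "transpose_mat Sk = Sk"
    unfolding Sa_def Sk_def using pos_def_sym_inv \<Sigma>pd K by auto
  have c1: "\<And>Z. dim_row Z = n \<Longrightarrow> K * (Sk * Z) = Z" unfolding Sk_def by (rule cancel1[OF Kc dK])
  have c2: "\<And>Z. dim_row Z = n \<Longrightarrow> Sk * (K * Z) = Z" unfolding Sk_def by (rule cancel2[OF Kc dK])
  have c3: "\<And>Z. dim_row Z = n \<Longrightarrow> \<Sigma> * (Sa * Z) = Z" unfolding Sa_def by (rule cancel1[OF \<Sigma>c d\<Sigma>])
  have c4: "Sk * K = 1\<^sub>m n" unfolding Sk_def by (rule inv'_left[OF Kc dK])
  have c5: "Sa * \<Sigma> = 1\<^sub>m n" unfolding Sa_def by (rule inv'_left[OF \<Sigma>c d\<Sigma>])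
  note dims = carrier_matD[OF Kc] carrier_matD[OF Rc] carrier_matD[OF H] carrier_matD[OF B]
    carrier_matD[OF Sac] carrier_matD[OF Skc] carrier_matD[OF \<Sigma>c] carrier_matD[OF Cc]
  define X where "X = Sa * B * Sa"
  have Xc: "X \<in> carrier_mat n n" unfolding X_def using Sac B by auto
  have Xs: "transpose_mat X = X" unfolding X_def using dims Sas Bs by (simp add: tmult massoc)
  define Y where "Y = Sk * B * Sk"
  have Yc: "Y \<in> carrier_mat n n" unfolding Y_def using Skc B by auto
  have Ys: "transpose_mat Y = Y" unfolding Y_def using dims Sks Bs by (simp add: tmult massoc)
  note dims2 = dims carrier_matD[OF Xc] carrier_matD[OF Yc]
  define Ta where "Ta = mtrace (Sa * B * Sa * B)"
  define Tb where "Tb = mtrace (Sk * B * Sk * B)"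
  have "0 \<le> mtrace (K * (Y - X) * K * (Y - X))"
    by (rule trace_sq(1)[OF K]) (use Xc Yc Xs Ys transpose_minus[OF Yc Xc] in auto)
  also have "\<dots> = mtrace (K * Y * K * Y) - mtrace (K * Y * K * X) - mtrace (K * X * K * Y) + mtrace (K * X * K * X)"
    by (rule tr_bilin_minus[OF Kc Yc Xc])
  also have "mtrace (K * Y * K * Y) = Tb"
  proof -
    have "K * Y * K * Y = B * (Sk * (B * Sk))" unfolding Y_def using dims by (simp add: massoc c1 c2)
    hence "mtrace (K * Y * K * Y) = mtrace (B * (Sk * (B * Sk)))" by simp
    also have "\<dots> = mtrace ((Sk * (B * Sk)) * B)" using dims by (simp add: mtrace_rot)
    finally show ?thesis unfolding Tb_def using dims by (simp add: massoc)
  qed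
  also have "mtrace (K * Y * K * X) = Ta"
  proof -
    have "K * Y * K * X = B * X" unfolding Y_def using dims2 by (simp add: massoc c1 c2)
    hence "mtrace (K * Y * K * X) = mtrace (B * (Sa * (B * Sa)))" unfolding X_def using dims by (simp add: massoc)
    also have "\<dots> = mtrace ((Sa * (B * Sa)) * B)" using dims by (simp add: mtrace_rot)
    finally show ?thesis unfolding Ta_def using dims by (simp add: massoc)
  qed
  also have "mtrace (K * X * K * Y) = Ta"
  proof -
    have "K * X * K * Y = K * (X * (B * Sk))" unfolding Y_def using dims2 by (simp add: massoc c1 c2)
    hence "mtrace (K * X * K * Y) = mtrace ((X * (B * Sk)) * K)" using dims2 by (simp add: mtrace_rot)
    also have "(X * (B * Sk)) * K = X * B" using dims2 by (simp add: massoc c4)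
    also have "mtrace (X * B) = mtrace (Sa * B * Sa * B)" unfolding X_def using dims by (simp add: massoc)
    finally show ?thesis unfolding Ta_def .
  qed
  finally have main: "0 \<le> Tb - Ta - Ta + mtrace (K * X * K * X)" .
  have sig: "mtrace (X * \<Sigma> * X * \<Sigma>) = Ta"
  proof -
    have "X * \<Sigma> * X * \<Sigma> = Sa * (B * (Sa * B))" unfolding X_def using dims by (simp add: massoc c3 c5)
    thus ?thesis unfolding Ta_def using dims by (simp add: massoc)
  qed
  have exp: "mtrace (X * \<Sigma> * X * \<Sigma>) = mtrace (X * K * X * K) + mtrace (X * K * X * C) + mtrace (X * C * X * K) + mtrace (X * C * X * C)"
    unfolding \<Sigma>_def by (rule tr_bilin_plus[OF Xc Kc Cc])
  have e1: "mtrace (X * K * X * K) = mtrace (K * X * K * X)"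
    using dims2 mtrace_rot[of "X * K * X" K] by (simp add: massoc)
  have e2: "mtrace (X * C * X * K) = mtrace (X * K * X * C)"
    using dims2 mtrace_rot[of "X * C" "X * K"] by (simp add: massoc)
  have a: "mtrace (X * K * X * C) \<ge> 0"
  proof -
    define G where "G = X * H"
    have Gc: "G \<in> carrier_mat n m" unfolding G_def using Xc H by auto
    have Q: "psd m (transpose_mat G * K * G)" by (rule psd_cong[OF pdn_psd[OF pos_def_pdn[OF K]] Gc])
    have "mtrace (X * K * X * C) = mtrace ((X * (K * (X * (H * R)))) * transpose_mat H)"
      unfolding C_def using dims2 by (simp add: massoc)
    also have "\<dots> = mtrace (transpose_mat H * (X * (K * (X * (H * R)))))"
      using dims2 by (simp add: mtrace_rot)
    also have "\<dots> = mtrace ((transpose_mat G * K * G) * R)"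
      unfolding G_def using dims2 Xs by (simp add: tmult massoc)
    finally show ?thesis using trace_psd_pd[OF R Q] by simp
  qed
  have b: "mtrace (X * C * X * C) \<ge> 0"
  proof -
    define G where "G = transpose_mat H * X * H"
    have Gc: "G \<in> carrier_mat m m" unfolding G_def using Xc H by auto
    have Gs: "transpose_mat G = G" unfolding G_def using dims2 Xs by (simp add: tmult massoc)
    have "mtrace (X * C * X * C) = mtrace ((X * (H * (R * (transpose_mat H * (X * (H * R)))))) * transpose_mat H)"
      unfolding C_def using dims2 by (simp add: massoc)
    also have "\<dots> = mtrace (transpose_mat H * (X * (H * (R * (transpose_mat H * (X * (H * R)))))))"
      using dims2 by (simp add: mtrace_rot)
    also have "\<dots> = mtrace ((G * R * G) * R)"
      unfolding G_def using dims2 by (simp add: massoc)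
    also have "\<dots> = mtrace (R * (G * R * G))"
      using dims2 Gc by (simp add: mtrace_rot)
    also have "\<dots> = mtrace (R * G * R * G)" using dims2 Gc by (simp add: massoc)
    finally show ?thesis using trace_sq(1)[OF R Gc Gs] by simp
  qed
  have "Ta \<le> Tb" using main sig exp e1 e2 a b by linarith
  thus ?thesis unfolding Ta_def Tb_def Sa_def Sk_def \<Sigma>_def .
qed



lemma var_x:
  fixes \<Sigma> E B :: "real mat"
  assumes \<Sigma>: "pos_def N \<Sigma>" and E: "E \<in> carrier_mat n2 N"
    and B: "B \<in> carrier_mat N N" and Bs: "transpose_mat B = B"
    and d2: "det (E * \<Sigma> * transpose_mat E) \<noteq> 0"
  shows "mtrace (inv' (E * \<Sigma> * transpose_mat E) * (E * B * transpose_mat E) *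
                 inv' (E * \<Sigma> * transpose_mat E) * (E * B * transpose_mat E))
         \<le> mtrace (inv' \<Sigma> * B * inv' \<Sigma> * B)"
proof -
  have \<Sigma>c: "\<Sigma> \<in> carrier_mat N N" using \<Sigma> by (simp add: pos_def_carrier)
  have d\<Sigma>: "det \<Sigma> \<noteq> 0" using pos_def_det[OF \<Sigma>] .
  define \<Sigma>2 where "\<Sigma>2 = E * \<Sigma> * transpose_mat E"
  define B2 where "B2 = E * B * transpose_mat E"
  define S where "S = inv' \<Sigma>"
  define S2 where "S2 = inv' \<Sigma>2"
  have \<Sigma>2c: "\<Sigma>2 \<in> carrier_mat n2 n2" unfolding \<Sigma>2_def using E \<Sigma>c by auto
  have B2c: "B2 \<in> carrier_mat n2 n2" unfolding B2_def using E B by auto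
  have Sc: "S \<in> carrier_mat N N" unfolding S_def using \<Sigma>c by auto
  have S2c: "S2 \<in> carrier_mat n2 n2" unfolding S2_def using \<Sigma>2c by auto
  note dims = carrier_matD[OF \<Sigma>c] carrier_matD[OF E] carrier_matD[OF B] carrier_matD[OF \<Sigma>2c]
    carrier_matD[OF B2c] carrier_matD[OF Sc] carrier_matD[OF S2c]
  have \<Sigma>s: "transpose_mat \<Sigma> = \<Sigma>" using pos_def_sym[OF \<Sigma>] .
  have \<Sigma>2s: "transpose_mat \<Sigma>2 = \<Sigma>2" unfolding \<Sigma>2_def using dims \<Sigma>s by (simp add: tmult massoc)
  have B2s: "transpose_mat B2 = B2" unfolding B2_def using dims Bs by (simp add: tmult massoc)
  have d2': "det \<Sigma>2 \<noteq> 0" unfolding \<Sigma>2_def using d2 .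
  have Ss: "transpose_mat S = S" unfolding S_def using pos_def_sym_inv[OF \<Sigma>] .
  have S2s: "transpose_mat S2 = S2" unfolding S2_def by (rule inv_sym[OF \<Sigma>2c d2' \<Sigma>2s])
  have c1: "\<And>W. dim_row W = N \<Longrightarrow> \<Sigma> * (S * W) = W" unfolding S_def by (rule cancel1[OF \<Sigma>c d\<Sigma>])
  have c4: "\<And>W. dim_row W = N \<Longrightarrow> S * (\<Sigma> * W) = W" unfolding S_def by (rule cancel2[OF \<Sigma>c d\<Sigma>])
  have c2: "S * \<Sigma> = 1\<^sub>m N" unfolding S_def by (rule inv'_left[OF \<Sigma>c d\<Sigma>])
  have c3: "\<And>W. dim_row W = n2 \<Longrightarrow> \<Sigma>2 * (S2 * W) = W" unfolding S2_def by (rule cancel1[OF \<Sigma>2c d2'])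
  have f1: "\<And>W. dim_row W = n2 \<Longrightarrow> E * (\<Sigma> * (transpose_mat E * W)) = \<Sigma>2 * W"
    unfolding \<Sigma>2_def using dims by (simp add: massoc)
  have f2: "\<And>W. dim_row W = n2 \<Longrightarrow> E * (B * (transpose_mat E * W)) = B2 * W"
    unfolding B2_def using dims by (simp add: massoc)
  define Z where "Z = S2 * B2 * S2"
  have Zc: "Z \<in> carrier_mat n2 n2" unfolding Z_def using S2c B2c by auto
  have Zs: "transpose_mat Z = Z" unfolding Z_def using dims S2s B2s by (simp add: tmult massoc)
  define Y where "Y = transpose_mat E * Z * E"
  have Yc: "Y \<in> carrier_mat N N" unfolding Y_def using E Zc by auto
  have Ys: "transpose_mat Y = Y" unfolding Y_def using dims carrier_matD[OF Zc] Zs by (simp add: tmult massoc)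
  define X where "X = S * B * S"
  have Xc: "X \<in> carrier_mat N N" unfolding X_def using Sc B by auto
  have Xs: "transpose_mat X = X" unfolding X_def using dims Ss Bs by (simp add: tmult massoc)
  note dims2 = dims carrier_matD[OF Zc] carrier_matD[OF Yc] carrier_matD[OF Xc]
  define T0 where "T0 = mtrace (S * B * S * B)"
  define T1 where "T1 = mtrace (S2 * B2 * S2 * B2)"
  have T1': "mtrace (B2 * Z) = T1"
  proof -
    have "mtrace (B2 * Z) = mtrace (B2 * (S2 * (B2 * S2)))" unfolding Z_def using dims by (simp add: massoc)
    also have "\<dots> = mtrace ((S2 * (B2 * S2)) * B2)" using dims by (simp add: mtrace_rot)
    finally show ?thesis unfolding T1_def using dims by (simp add: massoc)
  qed
  have "0 \<le> mtrace (\<Sigma> * (X - Y) * \<Sigma> * (X - Y))"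
    by (rule trace_sq(1)[OF \<Sigma>]) (use Xc Yc Xs Ys transpose_minus[OF Xc Yc] in auto)
  also have "\<dots> = mtrace (\<Sigma> * X * \<Sigma> * X) - mtrace (\<Sigma> * X * \<Sigma> * Y) - mtrace (\<Sigma> * Y * \<Sigma> * X) + mtrace (\<Sigma> * Y * \<Sigma> * Y)"
    by (rule tr_bilin_minus[OF \<Sigma>c Xc Yc])
  also have "mtrace (\<Sigma> * X * \<Sigma> * X) = T0"
  proof -
    have "\<Sigma> * X * \<Sigma> * X = B * (S * (B * S))" unfolding X_def using dims by (simp add: massoc c1)
    hence "mtrace (\<Sigma> * X * \<Sigma> * X) = mtrace ((S * (B * S)) * B)" using dims by (simp add: mtrace_rot)
    thus ?thesis unfolding T0_def using dims by (simp add: massoc)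
  qed
  also have "mtrace (\<Sigma> * X * \<Sigma> * Y) = T1"
  proof -
    have "\<Sigma> * X * \<Sigma> * Y = (B * (transpose_mat E * Z)) * E" unfolding X_def Y_def using dims2 by (simp add: massoc c1 c4)
    hence "mtrace (\<Sigma> * X * \<Sigma> * Y) = mtrace (E * (B * (transpose_mat E * Z)))" using dims2 by (simp add: mtrace_rot)
    also have "\<dots> = mtrace (B2 * Z)" using dims2 by (simp add: f2)
    finally show ?thesis using T1' by simp
  qed
  also have "mtrace (\<Sigma> * Y * \<Sigma> * X) = T1"
  proof -
    have "\<Sigma> * Y * \<Sigma> * X = \<Sigma> * (transpose_mat E * (Z * (E * (B * S))))" unfolding X_def Y_def using dims2 by (simp add: massoc c1)
    hence "mtrace (\<Sigma> * Y * \<Sigma> * X) = mtrace ((transpose_mat E * (Z * (E * (B * S)))) * \<Sigma>)" using dims2 by (simp add: mtrace_rot)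
    also have "(transpose_mat E * (Z * (E * (B * S)))) * \<Sigma> = transpose_mat E * (Z * (E * B))"
      using dims2 by (simp add: massoc c2)
    also have "mtrace (transpose_mat E * (Z * (E * B))) = mtrace ((Z * (E * B)) * transpose_mat E)"
      using dims2 by (simp add: mtrace_rot)
    also have "(Z * (E * B)) * transpose_mat E = Z * B2" unfolding B2_def using dims2 by (simp add: massoc)
    also have "mtrace (Z * B2) = mtrace (B2 * Z)" using dims2 by (simp add: mtrace_rot)
    finally show ?thesis using T1' by simp
  qed
  also have "mtrace (\<Sigma> * Y * \<Sigma> * Y) = T1"
  proof -
    have "\<Sigma> * Y * \<Sigma> * Y = (\<Sigma> * (transpose_mat E * (Z * (E * (\<Sigma> * (transpose_mat E * Z)))))) * E"
      unfolding Y_def using dims2 by (simp add: massoc)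
    hence "mtrace (\<Sigma> * Y * \<Sigma> * Y) = mtrace (E * (\<Sigma> * (transpose_mat E * (Z * (E * (\<Sigma> * (transpose_mat E * Z)))))))"
      using dims2 by (simp add: mtrace_rot)
    also have "E * (\<Sigma> * (transpose_mat E * (Z * (E * (\<Sigma> * (transpose_mat E * Z)))))) = \<Sigma>2 * (Z * (\<Sigma>2 * Z))"
      using dims2 by (simp add: f1)
    also have "\<Sigma>2 * (Z * (\<Sigma>2 * Z)) = B2 * Z" unfolding Z_def using dims2 by (simp add: massoc c3)
    finally show ?thesis using T1' by simp
  qed
  finally have "T1 \<le> T0" by simp
  thus ?thesis unfolding T0_def T1_def S_def S2_def \<Sigma>2_def B2_def .
qed



lemma hess_qf:
  fixes g :: "(nat \<Rightarrow> real) \<Rightarrow> real" and M :: "nat \<Rightarrow> (nat \<Rightarrow> real) \<Rightarrow> real mat"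
    and Bm :: "nat \<Rightarrow> nat \<Rightarrow> real mat"
  assumes fin: "finite S"
  and carM: "\<And>k z. k \<in> S \<Longrightarrow> M k z \<in> carrier_mat (nk k) (nk k)"
  and carB: "\<And>k i. k \<in> S \<Longrightarrow> Bm k i \<in> carrier_mat (nk k) (nk k)"
  and aff: "\<And>k z i s. k \<in> S \<Longrightarrow> M k (z(i := z i + s)) = M k z + s \<cdot>\<^sub>m Bm k i"
  and geq: "\<And>z. (\<forall>k\<in>S. det (M k z) > 0) \<Longrightarrow> g z = c0 + (\<Sum>k\<in>S. c k * ln (det (M k z)))"
  and good: "\<forall>k\<in>S. det (M k x) > 0"
  and v: "v \<in> carrier_vec d"
  shows "v \<bullet> (hessian g d x *\<^sub>v v) = - (\<Sum>k\<in>S. c k * mtrace (inv' (M k x) *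
      mat (nk k) (nk k) (\<lambda>(a,b). \<Sum>i<d. v $ i * Bm k i $$ (a,b)) * inv' (M k x) *
      mat (nk k) (nk k) (\<lambda>(a,b). \<Sum>i<d. v $ i * Bm k i $$ (a,b))))"
proof -
  let ?T = "\<lambda>k i j. mtrace (inv' (M k x) * Bm k j * inv' (M k x) * Bm k i)"
  have H: "hessian g d x $$ (i,j) = - (\<Sum>k\<in>S. c k * ?T k i j)" if "i < d" "j < d" for i j
    unfolding hessian_def using that hess_formula[OF fin carM carB aff geq good] by simp
  have "v \<bullet> (hessian g d x *\<^sub>v v) = (\<Sum>i<d. v $ i * (\<Sum>j<d. hessian g d x $$ (i,j) * v $ j))"
    using v unfolding hessian_def by (auto simp: scalar_prod_def row_def atLeast0LessThan intro!: sum.cong)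
  also have "\<dots> = (\<Sum>i<d. \<Sum>j<d. \<Sum>k\<in>S. - (c k * (v $ i * v $ j * ?T k i j)))"
    using H by (auto simp: sum_distrib_left sum_distrib_right sum_negf algebra_simps intro!: sum.cong)
  also have "\<dots> = (\<Sum>i<d. \<Sum>k\<in>S. \<Sum>j<d. - (c k * (v $ i * v $ j * ?T k i j)))"
    by (intro sum.cong refl sum.swap)
  also have "\<dots> = (\<Sum>k\<in>S. \<Sum>i<d. \<Sum>j<d. - (c k * (v $ i * v $ j * ?T k i j)))"
    by (rule sum.swap)
  also have "\<dots> = (\<Sum>k\<in>S. - (c k * (\<Sum>i<d. \<Sum>j<d. v $ i * v $ j * ?T k i j)))"
    by (simp add: sum_negf sum_distrib_left)
  also have "\<dots> = - (\<Sum>k\<in>S. c k * mtrace (inv' (M k x) *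
      mat (nk k) (nk k) (\<lambda>(a,b). \<Sum>i<d. v $ i * Bm k i $$ (a,b)) * inv' (M k x) *
      mat (nk k) (nk k) (\<lambda>(a,b). \<Sum>i<d. v $ i * Bm k i $$ (a,b))))"
    unfolding sum_negf[symmetric]
  proof (intro sum.cong refl arg_cong[where f = uminus] arg_cong[where f = "\<lambda>x. _ * x"])
    fix k assume k: "k \<in> S"
    show "(\<Sum>i<d. \<Sum>j<d. v $ i * v $ j * ?T k i j) = mtrace (inv' (M k x) *
      mat (nk k) (nk k) (\<lambda>(a,b). \<Sum>i<d. v $ i * Bm k i $$ (a,b)) * inv' (M k x) *
      mat (nk k) (nk k) (\<lambda>(a,b). \<Sum>i<d. v $ i * Bm k i $$ (a,b)))"
      by (rule bilin_tr[of _ "nk k" d "Bm k" "\<lambda>i. v $ i"]) (use carM[OF k] carB[OF k] in auto)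
  qed
  finally show ?thesis .
qed

lemma veh_list_set: "(i,j) \<in> set (veh_list m) \<longleftrightarrow> j \<le> i \<and> i < m"
  unfolding veh_list_def by (auto intro!: bexI[where x = j] rev_image_eqI[where x = i])

lemma veh_list_distinct: "distinct (veh_list m)"
  unfolding veh_list_def
proof (rule distinct_concat)
  show "distinct (map (\<lambda>j. map (\<lambda>i. (i, j)) [j..<m]) [0..<m])"
    unfolding distinct_map
  proof (intro conjI)
    show "inj_on (\<lambda>j. map (\<lambda>i. (i, j)) [j..<m]) (set [0..<m])"
    proof (rule inj_onI)
      fix j j' assume j: "j \<in> set [0..<m]" and j': "j' \<in> set [0..<m]"
        and eq: "map (\<lambda>i. (i, j)) [j..<m] = map (\<lambda>i. (i, j')) [j'..<m]"
      have "(j, j) \<in> set (map (\<lambda>i. (i, j)) [j..<m])" using j by auto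
      hence "(j, j) \<in> set (map (\<lambda>i. (i, j')) [j'..<m])" using eq by simp
      thus "j = j'" by auto
    qed
  qed simp
  show "\<And>ys. ys \<in> set (map (\<lambda>j. map (\<lambda>i. (i, j)) [j..<m]) [0..<m]) \<Longrightarrow> distinct ys"
    by (auto simp: distinct_map inj_on_def)
  show "\<And>ys zs. ys \<in> set (map (\<lambda>j. map (\<lambda>i. (i, j)) [j..<m]) [0..<m]) \<Longrightarrow>
           zs \<in> set (map (\<lambda>j. map (\<lambda>i. (i, j)) [j..<m]) [0..<m]) \<Longrightarrow> ys \<noteq> zs \<Longrightarrow> set ys \<inter> set zs = {}"
    by auto
qed

lemma veh_list_length: "length (veh_list m) = m * (m + 1) div 2"
proof -
  have "length (veh_list m) = (\<Sum>j<m. m - j)"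
    unfolding veh_list_def by (simp add: length_concat comp_def sum_list_sum_nth atLeast0LessThan)
  also have "\<dots> = (\<Sum>j\<in>{1..m}. j)"
    by (rule sum.reindex_bij_witness[of _ "\<lambda>j. m - j" "\<lambda>j. m - j"]) auto
  also have "\<dots> = m * (m + 1) div 2" using gauss_sum_from_Suc_0[of m, where 'a=nat] by simp
  finally show ?thesis .
qed

definition vidx :: "nat \<Rightarrow> nat \<Rightarrow> nat \<Rightarrow> nat" where
  "vidx m a b = (THE k. k < length (veh_list m) \<and> veh_list m ! k = (max a b, min a b))"

lemma the_idx: assumes "distinct xs" "k < length xs"
  shows "(THE k'. k' < length xs \<and> xs ! k' = xs ! k) = k"
  using assms by (auto intro!: the_equality simp: nth_eq_iff_index_eq)

lemma vidx: assumes "a < m" "b < m"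
  shows "vidx m a b < length (veh_list m)" "veh_list m ! vidx m a b = (max a b, min a b)"
proof -
  have "(max a b, min a b) \<in> set (veh_list m)" using assms by (auto simp: veh_list_set)
  then obtain k where k: "k < length (veh_list m)" "veh_list m ! k = (max a b, min a b)"
    by (auto simp: in_set_conv_nth)
  have "vidx m a b = k" unfolding vidx_def k(2)[symmetric] by (rule the_idx[OF veh_list_distinct k(1)])
  thus "vidx m a b < length (veh_list m)" "veh_list m ! vidx m a b = (max a b, min a b)" using k by auto
qed

lemma vidx_nth: assumes "k < length (veh_list m)" and "veh_list m ! k = (a,b)"
  shows "vidx m a b = k"
proof -
  have "(a,b) \<in> set (veh_list m)" using assms by (metis nth_mem)
  hence "b \<le> a" by (simp add: veh_list_set)
  hence "(max a b, min a b) = veh_list m ! k" using assms by simp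
  thus ?thesis unfolding vidx_def by (simp add: the_idx[OF veh_list_distinct assms(1)])
qed

lemma mat_of_veh_index: "a < m \<Longrightarrow> b < m \<Longrightarrow> mat_of_veh m x $$ (a,b) = x (vidx m a b)"
  unfolding mat_of_veh_def vidx_def by simp

lemma mat_of_veh_dims[simp]: "dim_row (mat_of_veh m x) = m" "dim_col (mat_of_veh m x) = m"
  unfolding mat_of_veh_def by simp_all

lemma mat_of_veh_carrier[simp]: "mat_of_veh m x \<in> carrier_mat m m"
  unfolding mat_of_veh_def by simp

lemma mat_of_veh_sym: "transpose_mat (mat_of_veh m x) = mat_of_veh m x"
  unfolding mat_of_veh_def by (auto intro!: eq_matI simp: max.commute min.commute)

lemma mat_of_veh_upd:
  "mat_of_veh m (z(i := z i + s)) = mat_of_veh m z + s \<cdot>\<^sub>m mat_of_veh m (\<lambda>k. if k = i then 1 else 0)"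
  by (auto intro!: eq_matI simp: mat_of_veh_index)

lemma mat_of_veh_veh: assumes R: "R \<in> carrier_mat m m" and sym: "transpose_mat R = R"
  shows "mat_of_veh m (veh m R) = R"
proof (rule eq_matI)
  fix a b assume ab: "a < dim_row R" "b < dim_col R"
  hence ab': "a < m" "b < m" using R by auto
  have "mat_of_veh m (veh m R) $$ (a,b) = R $$ (max a b, min a b)"
    unfolding mat_of_veh_index[OF ab'] veh_def using vidx(2)[OF ab'] by simp
  also have "\<dots> = R $$ (a,b)"
  proof (cases "b \<le> a")
    case True thus ?thesis by (simp add: max_def min_def)
  next
    case False
    hence "R $$ (max a b, min a b) = R $$ (b,a)" by (simp add: max_def min_def)
    also have "\<dots> = transpose_mat R $$ (a,b)" using ab' R by simp
    finally show ?thesis using sym by simp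
  qed
  finally show "mat_of_veh m (veh m R) $$ (a,b) = R $$ (a,b)" .
qed (use R in auto)

lemma mat_of_veh_Bv: assumes v: "v \<in> carrier_vec (m * (m + 1) div 2)"
  shows "mat m m (\<lambda>(a,b). \<Sum>i<m * (m + 1) div 2. v $ i * mat_of_veh m (\<lambda>k. if k = i then 1 else 0) $$ (a,b))
       = mat_of_veh m (\<lambda>k. v $ k)"
proof (rule eq_matI)
  fix a b assume "a < dim_row (mat_of_veh m (\<lambda>k. v $ k))" "b < dim_col (mat_of_veh m (\<lambda>k. v $ k))"
  hence ab: "a < m" "b < m" by auto
  have lt: "vidx m a b < m * (m + 1) div 2" using vidx(1)[OF ab] veh_list_length by simp
  show "mat m m (\<lambda>(a,b). \<Sum>i<m * (m + 1) div 2. v $ i * mat_of_veh m (\<lambda>k. if k = i then 1 else 0) $$ (a,b)) $$ (a,b)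
       = mat_of_veh m (\<lambda>k. v $ k) $$ (a,b)"
    using ab lt by (simp add: mat_of_veh_index if_distrib[of "\<lambda>x. _ * x"] cong: if_cong)
qed auto

lemma mat_of_veh_nz: assumes v: "v \<in> carrier_vec (m * (m + 1) div 2)" "v \<noteq> 0\<^sub>v (m * (m + 1) div 2)"
  shows "mat_of_veh m (\<lambda>k. v $ k) \<noteq> 0\<^sub>m m m"
proof -
  obtain i where i: "i < m * (m + 1) div 2" "v $ i \<noteq> 0" using v by (metis eq_vecI carrier_vecD index_zero_vec)
  obtain a b where p: "veh_list m ! i = (a,b)" by fastforce
  have il: "i < length (veh_list m)" using i veh_list_length by simp
  have "(a,b) \<in> set (veh_list m)" using p il by (metis nth_mem)
  hence ab: "a < m" "b < m" by (auto simp: veh_list_set)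
  have "mat_of_veh m (\<lambda>k. v $ k) $$ (a,b) = v $ i" using vidx_nth[OF il p] ab by (simp add: mat_of_veh_index)
  thus ?thesis using i ab by auto
qed



lemma mat_of_vecm_dims[simp]: "dim_row (mat_of_vecm n1 n2 y) = n1" "dim_col (mat_of_vecm n1 n2 y) = n2"
  unfolding mat_of_vecm_def by simp_all

lemma mat_of_vecm_carrier[simp]: "mat_of_vecm n1 n2 y \<in> carrier_mat n1 n2"
  unfolding mat_of_vecm_def by simp

lemma mat_of_vecm_index: "a < n1 \<Longrightarrow> b < n2 \<Longrightarrow> mat_of_vecm n1 n2 y $$ (a,b) = y (a + n1 * b)"
  unfolding mat_of_vecm_def by simp

lemma mat_of_vecm_upd:
  "mat_of_vecm n1 n2 (z(i := z i + s)) = mat_of_vecm n1 n2 z + s \<cdot>\<^sub>m mat_of_vecm n1 n2 (\<lambda>k. if k = i then 1 else 0)"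
  by (auto intro!: eq_matI simp: mat_of_vecm_index)

lemma mat_of_vecm_vecm: assumes N: "N \<in> carrier_mat n1 n2"
  shows "mat_of_vecm n1 n2 (vecm n1 N) = N"
  using N by (auto intro!: eq_matI simp: mat_of_vecm_index vecm_def)

lemma idx_lt: fixes a b n1 n2 :: nat assumes "a < n1" "b < n2" shows "a + n1 * b < n1 * n2"
proof -
  have "a + n1 * b < n1 + n1 * b" using assms by simp
  also have "\<dots> = n1 * (b + 1)" by (simp add: algebra_simps)
  also have "\<dots> \<le> n1 * n2" using assms by (intro mult_le_mono2) simp
  finally show ?thesis .
qed

lemma vecm_Bv_entry: assumes "a < n1" "b < n2"
  shows "(\<Sum>i<n1 * n2. (v $ i) * mat_of_vecm n1 n2 (\<lambda>k. if k = i then 1 else 0) $$ (a,b)) = v $ (a + n1 * b)"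
  using assms idx_lt[OF assms] by (simp add: mat_of_vecm_index if_distrib[of "\<lambda>x. _ * x"] cong: if_cong)

lemma mat_of_vecm_nz: assumes v: "v \<in> carrier_vec (n1 * n2)" "v \<noteq> 0\<^sub>v (n1 * n2)"
  shows "mat_of_vecm n1 n2 (\<lambda>k. v $ k) \<noteq> 0\<^sub>m n1 n2"
proof -
  obtain i where i: "i < n1 * n2" "v $ i \<noteq> 0" using v by (metis eq_vecI carrier_vecD index_zero_vec)
  have n1: "n1 > 0" using i by (cases n1) auto
  have a: "i mod n1 < n1" using n1 by simp
  have b: "i div n1 < n2" using i by (simp add: less_mult_imp_div_less mult.commute)
  have "mat_of_vecm n1 n2 (\<lambda>k. v $ k) $$ (i mod n1, i div n1) = v $ i"
    using a b by (simp add: mat_of_vecm_index)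
  thus ?thesis using i a b by auto
qed

definition Fk :: "nat \<Rightarrow> nat \<Rightarrow> real mat \<Rightarrow> real mat" where
  "Fk n1 n2 V = four_block_mat (0\<^sub>m n1 n1) V (transpose_mat V) (0\<^sub>m n2 n2)"

lemma Fk_carrier[simp]: "Fk n1 n2 V \<in> carrier_mat (n1 + n2) (n1 + n2)"
  unfolding Fk_def by simp

lemma Kmat_carrier[simp]: "Kmat n1 n2 N \<in> carrier_mat (n1 + n2) (n1 + n2)"
  unfolding Kmat_def by simp

lemma Kmat_add: assumes N: "N \<in> carrier_mat n1 n2" and N': "N' \<in> carrier_mat n1 n2"
  shows "Kmat n1 n2 (N + s \<cdot>\<^sub>m N') = Kmat n1 n2 N + s \<cdot>\<^sub>m Fk n1 n2 N'"
  using N N' unfolding Kmat_def Fk_def by (auto intro!: eq_matI)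

lemma Fk_sym: assumes V: "V \<in> carrier_mat n1 n2" shows "transpose_mat (Fk n1 n2 V) = Fk n1 n2 V"
  using V unfolding Fk_def by (auto intro!: eq_matI)

lemma Fk_nz: assumes V: "V \<in> carrier_mat n1 n2" "V \<noteq> 0\<^sub>m n1 n2" shows "Fk n1 n2 V \<noteq> 0\<^sub>m (n1 + n2) (n1 + n2)"
proof -
  obtain a b where ab: "a < n1" "b < n2" "V $$ (a,b) \<noteq> 0" using V by (metis eq_matI carrier_matD index_zero_mat)
  have "Fk n1 n2 V $$ (a, n1 + b) = V $$ (a,b)" using ab V unfolding Fk_def by auto
  thus ?thesis using ab by auto
qed

lemma Fk_Bv: assumes v: "v \<in> carrier_vec (n1 * n2)"
  shows "mat (n1 + n2) (n1 + n2) (\<lambda>(a,b). \<Sum>i<n1 * n2. v $ i * Fk n1 n2 (mat_of_vecm n1 n2 (\<lambda>k. if k = i then 1 else 0)) $$ (a,b))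
    = Fk n1 n2 (mat_of_vecm n1 n2 (\<lambda>k. v $ k))"
proof (rule eq_matI)
  fix a b assume "a < dim_row (Fk n1 n2 (mat_of_vecm n1 n2 (\<lambda>k. v $ k)))" "b < dim_col (Fk n1 n2 (mat_of_vecm n1 n2 (\<lambda>k. v $ k)))"
  hence ab: "a < n1 + n2" "b < n1 + n2" unfolding Fk_def by auto
  show "mat (n1 + n2) (n1 + n2) (\<lambda>(a,b). \<Sum>i<n1 * n2. v $ i * Fk n1 n2 (mat_of_vecm n1 n2 (\<lambda>k. if k = i then 1 else 0)) $$ (a,b)) $$ (a,b)
    = Fk n1 n2 (mat_of_vecm n1 n2 (\<lambda>k. v $ k)) $$ (a,b)"
  proof (cases "a < n1")
    case True
    show ?thesis
    proof (cases "b < n1")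
      case True
      thus ?thesis using \<open>a < n1\<close> ab unfolding Fk_def by simp
    next
      case False
      hence "b - n1 < n2" using ab by simp
      thus ?thesis using \<open>a < n1\<close> False ab vecm_Bv_entry[OF \<open>a < n1\<close> \<open>b - n1 < n2\<close>, of v]
        unfolding Fk_def by (simp add: mat_of_vecm_index)
    qed
  next
    case False
    hence a': "a - n1 < n2" using ab by simp
    show ?thesis
    proof (cases "b < n1")
      case True
      thus ?thesis using False a' ab vecm_Bv_entry[OF \<open>b < n1\<close> a', of v]
        unfolding Fk_def by (simp add: mat_of_vecm_index)
    next
      case False
      thus ?thesis using \<open>\<not> a < n1\<close> ab unfolding Fk_def by simp
    qed
  qed
qed (auto simp: Fk_def)

lemma mult3_index: fixes X E Y :: "real mat"
  assumes X: "X \<in> carrier_mat r p" and E: "E \<in> carrier_mat p p" and Y: "Y \<in> carrier_mat p s"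
    and a: "a < r" and b: "b < s"
  shows "(X * E * Y) $$ (a,b) = (\<Sum>c<p. \<Sum>e<p. X $$ (a,c) * E $$ (c,e) * Y $$ (e,b))"
proof -
  have XE: "X * E \<in> carrier_mat r p" using X E by simp
  have "(X * E * Y) $$ (a,b) = row (X * E) a \<bullet> col Y b" using XE Y a b by (intro index_mult_mat(1)) auto
  also have "\<dots> = (\<Sum>e<p. (X * E) $$ (a,e) * Y $$ (e,b))"
    using XE Y a b carrier_matD[OF XE] by (auto simp: scalar_prod_def atLeast0LessThan intro!: sum.cong)
  also have "\<dots> = (\<Sum>e<p. (\<Sum>c<p. X $$ (a,c) * E $$ (c,e)) * Y $$ (e,b))"
    using X E a by (auto simp: scalar_prod_def row_def col_def atLeast0LessThan intro!: sum.cong)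
  also have "\<dots> = (\<Sum>c<p. \<Sum>e<p. X $$ (a,c) * E $$ (c,e) * Y $$ (e,b))"
    by (simp add: sum_distrib_right) (rule sum.swap)
  finally show ?thesis .
qed

lemma lin_sandwich: fixes X Y V :: "real mat" and E :: "nat \<Rightarrow> real mat"
  assumes X: "X \<in> carrier_mat r p" and Y: "Y \<in> carrier_mat p s" and V: "V \<in> carrier_mat p p"
    and E: "\<And>i. i < d \<Longrightarrow> E i \<in> carrier_mat p p"
    and VE: "\<And>a b. a < p \<Longrightarrow> b < p \<Longrightarrow> V $$ (a,b) = (\<Sum>i<d. w i * E i $$ (a,b))"
  shows "mat r s (\<lambda>(a,b). \<Sum>i<d. w i * (X * E i * Y) $$ (a,b)) = X * V * Y"
proof (rule eq_matI)
  fix a b assume "a < dim_row (X * V * Y)" "b < dim_col (X * V * Y)"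
  hence ab: "a < r" "b < s" using X Y by auto
  have "(\<Sum>i<d. w i * (X * E i * Y) $$ (a,b)) = (\<Sum>i<d. \<Sum>c<p. \<Sum>e<p. w i * (X $$ (a,c) * E i $$ (c,e) * Y $$ (e,b)))"
    using mult3_index[OF X E Y ab] by (auto simp: sum_distrib_left intro!: sum.cong)
  also have "\<dots> = (\<Sum>c<p. \<Sum>e<p. \<Sum>i<d. w i * (X $$ (a,c) * E i $$ (c,e) * Y $$ (e,b)))"
    by (subst sum.swap) (simp add: sum.swap[of _ "{..<d}"])
  also have "\<dots> = (\<Sum>c<p. \<Sum>e<p. X $$ (a,c) * V $$ (c,e) * Y $$ (e,b))"
    using VE by (auto simp: sum_distrib_left sum_distrib_right algebra_simps intro!: sum.cong)
  also have "\<dots> = (X * V * Y) $$ (a,b)" using mult3_index[OF X V Y ab] by simp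
  finally show "mat r s (\<lambda>(a,b). \<Sum>i<d. w i * (X * E i * Y) $$ (a,b)) $$ (a,b) = (X * V * Y) $$ (a,b)"
    using ab by simp
qed (use X Y in auto)

lemma tr11: fixes Y B :: "real mat" assumes "Y \<in> carrier_mat 1 1" "B \<in> carrier_mat 1 1"
  shows "mtrace (Y * B * Y * B) \<ge> 0"
proof -
  have "mtrace (Y * B * Y * B) = (Y $$ (0,0) * B $$ (0,0)) * (Y $$ (0,0) * B $$ (0,0))"
    using assms unfolding mtrace_def by (simp add: scalar_prod_def row_def col_def)
  thus ?thesis by simp
qed

lemma minv_inv': fixes K :: "real mat" assumes K: "K \<in> carrier_mat n n" and d: "det K \<noteq> 0"
  shows "minv K = inv' K"
proof -
  have "K \<in> Units (ring_mat TYPE(real) n undefined)" by (rule det_non_zero_imp_unit[OF K d])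
  then obtain B where B: "mat_inverse K = Some B"
    using mat_inverse(1)[OF K, of undefined] by (cases "mat_inverse K") auto
  have "K * B = 1\<^sub>m n" "B \<in> carrier_mat n n" using mat_inverse(2)[OF K B] by auto
  hence "B = inv' K" using inv_unique_r[OF K d] by blast
  thus ?thesis unfolding minv_def B by simp
qed

lemma add_assoc': fixes A B C :: "real mat"
  shows "dim_row A = dim_row B \<Longrightarrow> dim_col A = dim_col B \<Longrightarrow> dim_row B = dim_row C \<Longrightarrow> dim_col B = dim_col C \<Longrightarrow>
    A + B + C = A + (B + C)"
  by (rule assoc_add_mat[of _ "dim_row A" "dim_col A"]) (auto intro!: carrier_matI)

lemma add_comm': fixes A B :: "real mat"
  shows "dim_row A = dim_row B \<Longrightarrow> dim_col A = dim_col B \<Longrightarrow> A + B = B + A"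
  by (rule comm_add_mat[of _ "dim_row A" "dim_col A"]) (auto intro!: carrier_matI)

definition selE :: "nat \<Rightarrow> nat \<Rightarrow> real mat" where
  "selE n1 n2 = mat n2 (n1 + n2) (\<lambda>(i,j). if j = n1 + i then 1 else 0)"

lemma selE_carrier[simp]: "selE n1 n2 \<in> carrier_mat n2 (n1 + n2)"
  unfolding selE_def by simp

lemma selE_mult: assumes A: "A \<in> carrier_mat (n1 + n2) q" and i: "i < n2" and j: "j < q"
  shows "(selE n1 n2 * A) $$ (i,j) = A $$ (n1 + i, j)"
proof -
  have "(selE n1 n2 * A) $$ (i,j) = (\<Sum>c<n1 + n2. (if c = n1 + i then 1 else 0) * A $$ (c, j))"
    using A i j unfolding selE_def by (auto simp: scalar_prod_def row_def col_def atLeast0LessThan intro!: sum.cong)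
  also have "\<dots> = A $$ (n1 + i, j)" using i by (simp add: if_distrib[of "\<lambda>x. x * _"] cong: if_cong)
  finally show ?thesis .
qed

lemma selE_H: assumes H1: "H1 \<in> carrier_mat n1 m" and H2: "H2 \<in> carrier_mat n2 m"
  shows "selE n1 n2 * (H1 @\<^sub>r H2) = H2"
proof (rule eq_matI)
  fix i j assume ij: "i < dim_row H2" "j < dim_col H2"
  have C: "H1 @\<^sub>r H2 \<in> carrier_mat (n1 + n2) m" using H1 H2 by auto
  show "(selE n1 n2 * (H1 @\<^sub>r H2)) $$ (i,j) = H2 $$ (i,j)"
    using selE_mult[OF C, of i j] ij H1 H2 unfolding append_rows_def by auto
qed (use H2 carrier_append_rows[OF H1 H2] in \<open>auto simp: selE_def\<close>)

lemma selE_K: shows "selE n1 n2 * Kmat n1 n2 N * transpose_mat (selE n1 n2) = 1\<^sub>m n2"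
proof (rule eq_matI)
  fix i j assume ij: "i < dim_row (1\<^sub>m n2 :: real mat)" "j < dim_col (1\<^sub>m n2 :: real mat)"
  have C: "selE n1 n2 * Kmat n1 n2 N \<in> carrier_mat n2 (n1 + n2)"
    using mult_carrier_mat[OF selE_carrier Kmat_carrier] .
  have "(selE n1 n2 * Kmat n1 n2 N * transpose_mat (selE n1 n2)) $$ (i,j) =
        (\<Sum>c<n1 + n2. (selE n1 n2 * Kmat n1 n2 N) $$ (i,c) * (if c = n1 + j then 1 else 0))"
    using ij C unfolding selE_def by (auto simp: scalar_prod_def row_def col_def atLeast0LessThan intro!: sum.cong)
  also have "\<dots> = (selE n1 n2 * Kmat n1 n2 N) $$ (i, n1 + j)" using ij by (simp add: if_distrib[of "\<lambda>x. _ * x"] cong: if_cong)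
  also have "\<dots> = Kmat n1 n2 N $$ (n1 + i, n1 + j)" using ij selE_mult[OF Kmat_carrier, where i=i and j="n1 + j"] by auto
  also have "\<dots> = 1\<^sub>m n2 $$ (i,j)" using ij unfolding Kmat_def by auto
  finally show "(selE n1 n2 * Kmat n1 n2 N * transpose_mat (selE n1 n2)) $$ (i,j) = 1\<^sub>m n2 $$ (i,j)" .
qed (auto simp: selE_def)



lemma hessian_carrier: "hessian g d x \<in> carrier_mat d d"
  unfolding hessian_def by simp

lemma pos_def_add_C: fixes K H R :: "real mat"
  assumes K: "pos_def n K" and R: "pos_def m R" and H: "H \<in> carrier_mat n m"
  shows "pos_def n (K + H * R * transpose_mat H)"
proof -
  have Kc: "K \<in> carrier_mat n n" and Rc: "R \<in> carrier_mat m m" using K R by (auto simp: pos_def_carrier)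
  let ?C = "H * R * transpose_mat H"
  have Cc: "?C \<in> carrier_mat n n" using H Rc by auto
  have Cpsd: "psd n ?C"
  proof -
    have "psd n (transpose_mat (transpose_mat H) * R * transpose_mat H)"
      by (rule psd_cong[OF pdn_psd[OF pos_def_pdn[OF R]]]) (use H in auto)
    thus ?thesis by simp
  qed
  have Cs: "transpose_mat ?C = ?C"
    using H Rc pos_def_sym[OF R] carrier_matD[OF H] carrier_matD[OF Rc] by (simp add: tmult massoc)
  show ?thesis unfolding pos_def_def
  proof (intro conjI)
    show "K + ?C \<in> carrier_mat n n" using Kc Cc by auto
    show "transpose_mat (K + ?C) = K + ?C" using transpose_add[OF Kc Cc] Cs pos_def_sym[OF K] by simp
    show "\<forall>v\<in>carrier_vec n. v \<noteq> 0\<^sub>v n \<longrightarrow> 0 < v \<bullet> ((K + ?C) *\<^sub>v v)"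
      using pdn_add_psd[OF pos_def_pdn[OF K] Cpsd] unfolding pdn_def by auto
  qed
qed

lemma det_inv': fixes K :: "real mat" assumes K: "K \<in> carrier_mat n n" and d: "det K \<noteq> 0"
  shows "det (inv' K) = 1 / det K"
proof -
  have "det K * det (inv' K) = det (K * inv' K)" using K by (simp add: det_mult[of K n "inv' K"])
  also have "\<dots> = 1" using inv'_right[OF K d] by simp
  finally show ?thesis using d by (simp add: field_simps)
qed

lemma lndet_split: fixes K C :: "real mat"
  assumes K: "K \<in> carrier_mat n n" and C: "C \<in> carrier_mat n n"
    and dK: "det K > 0" and dKC: "det (K + C) > 0"
  shows "ln (det (1\<^sub>m n + inv' K * C)) = ln (det (K + C)) - ln (det K)"
proof -
  have iK: "inv' K \<in> carrier_mat n n" using K by simp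
  have "inv' K * (K + C) = inv' K * K + inv' K * C" by (rule mult_add_distrib_mat[OF iK K C])
  also have "\<dots> = 1\<^sub>m n + inv' K * C" using inv'_left[OF K] dK by simp
  finally have eq: "1\<^sub>m n + inv' K * C = inv' K * (K + C)" by simp
  have "det (1\<^sub>m n + inv' K * C) = det (inv' K) * det (K + C)"
    unfolding eq using iK K C by (simp add: det_mult[of _ n])
  also have "\<dots> = det (K + C) / det K" using det_inv'[OF K] dK by simp
  finally show ?thesis using dK dKC by (simp add: ln_div)
qed

lemma y_side:
  fixes H1 H2 R N :: "real mat" and W3 :: "nat \<Rightarrow> real mat" and PI :: "nat \<Rightarrow> real" and PT t :: real
  assumes H1: "H1 \<in> carrier_mat n1 m" and H2: "H2 \<in> carrier_mat n2 m" and t: "t > 0"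
    and R: "pos_def m R" and N: "N \<in> carrier_mat n1 n2" and K: "pos_def (n1 + n2) (Kmat n1 n2 N)"
  shows "det (hessian (\<lambda>y. f_bar H1 H2 J W3 PT PI t R (Kmat n1 n2 (mat_of_vecm n1 n2 y)))
            (n1 * n2) (vecm n1 N)) \<noteq> 0"
proof -
  define Nn where "Nn = n1 + n2"
  define H where "H = H1 @\<^sub>r H2"
  have Hc: "H \<in> carrier_mat Nn m" unfolding H_def Nn_def using H1 H2 by auto
  have Rc: "R \<in> carrier_mat m m" using R by (simp add: pos_def_carrier)
  define C0 where "C0 = H * R * transpose_mat H"
  have C0c: "C0 \<in> carrier_mat Nn Nn" unfolding C0_def using Hc Rc by auto
  define KK where "KK y = Kmat n1 n2 (mat_of_vecm n1 n2 y)" for y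
  have KKc: "KK y \<in> carrier_mat Nn Nn" for y unfolding KK_def Nn_def by simp
  define W2 where "W2 = transpose_mat H2 * H2"
  define c0 where "c0 = - ln (det (1\<^sub>m m + W2 * R)) + ln (det R) / t + ln (PT - mtrace R) / t
       + (\<Sum>j\<in>{1..J}. ln (PI j - mtrace (W3 j * R)) / t)"
  define M where "M k y = (if k = 0 then KK y + C0 else KK y)" for k :: nat and y
  define E' where "E' i = mat_of_vecm n1 n2 (\<lambda>k. if k = i then 1 else 0)" for i
  define Bm where "Bm k i = Fk n1 n2 (E' i)" for k :: nat and i
  define c where "c k = (if k = 0 then 1 else - (1 + 1 / t))" for k :: nat
  define g where "g y = f_bar H1 H2 J W3 PT PI t R (Kmat n1 n2 (mat_of_vecm n1 n2 y))" for y
  have fin: "finite {0::nat, 1}" by simp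
  have carM: "M k z \<in> carrier_mat ((\<lambda>_. Nn) k) ((\<lambda>_. Nn) k)" if "k \<in> {0,1}" for k z
    unfolding M_def using KKc C0c by auto
  have carB: "Bm k i \<in> carrier_mat ((\<lambda>_. Nn) k) ((\<lambda>_. Nn) k)" if "k \<in> {0,1}" for k i
    unfolding Bm_def Nn_def by simp
  have KKaff: "KK (z(i := z i + s)) = KK z + s \<cdot>\<^sub>m Fk n1 n2 (E' i)" for z i s
    unfolding KK_def E'_def mat_of_vecm_upd by (rule Kmat_add) auto
  have aff: "M k (z(i := z i + s)) = M k z + s \<cdot>\<^sub>m Bm k i" if "k \<in> {0,1}" for k z i s
  proof (cases "k = 0")
    case True
    have d: "dim_row (KK z) = Nn" "dim_col (KK z) = Nn" "dim_row C0 = Nn" "dim_col C0 = Nn"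
      "dim_row (Fk n1 n2 (E' i)) = Nn" "dim_col (Fk n1 n2 (E' i)) = Nn"
      using KKc[of z] C0c carrier_matD[OF Fk_carrier[of n1 n2 "E' i"]] unfolding Nn_def by auto
    have "KK z + s \<cdot>\<^sub>m Fk n1 n2 (E' i) + C0 = KK z + C0 + s \<cdot>\<^sub>m Fk n1 n2 (E' i)"
      using d by (simp add: add_assoc' add_comm'[of "s \<cdot>\<^sub>m Fk n1 n2 (E' i)" C0])
    thus ?thesis unfolding M_def Bm_def KKaff using True by simp
  next
    case False
    thus ?thesis unfolding M_def Bm_def KKaff by simp
  qed
  have minvKK: "minv (KK y) = inv' (KK y)" if "det (KK y) \<noteq> 0" for y
    by (rule minv_inv'[OF KKc that])
  have geq: "g z = c0 + (\<Sum>k\<in>{0,1}. c k * ln (det (M k z)))" if good: "\<forall>k\<in>{0,1}. det (M k z) > 0" for z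
  proof -
    have g1: "det (KK z + C0) > 0" and g2: "det (KK z) > 0" using good unfolding M_def by auto
    have dimH: "dim_row H = Nn" using Hc by simp
    have "minv (KK z) * H * R * transpose_mat H = inv' (KK z) * C0"
      unfolding minvKK[OF g2[THEN less_imp_neq, symmetric]] C0_def
      using carrier_matD[OF Hc] carrier_matD[OF Rc] carrier_matD[OF KKc[of z]] by (simp add: massoc)
    hence fo: "f_obj H1 H2 R (KK z) = ln (det (KK z + C0)) - ln (det (KK z)) - ln (det (1\<^sub>m m + W2 * R))"
      unfolding f_obj_def Let_def H_def[symmetric] W2_def[symmetric] dimH
      using lndet_split[OF KKc C0c g2 g1] Rc by simp
    show ?thesis
      unfolding g_def KK_def[symmetric] f_bar_def fo c0_def c_def M_def
      using t by (simp add: field_simps)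
  qed
  have x0: "KK (vecm n1 N) = Kmat n1 n2 N" unfolding KK_def mat_of_vecm_vecm[OF N] ..
  have \<Sigma>: "pos_def Nn (Kmat n1 n2 N + C0)" unfolding C0_def Nn_def
    by (rule pos_def_add_C[OF K R]) (use Hc Nn_def in auto)
  have good: "\<forall>k\<in>{0,1}. det (M k (vecm n1 N)) > 0"
    unfolding M_def x0 using pdn_det_pos[OF pos_def_pdn[OF \<Sigma>]] pdn_det_pos[OF pos_def_pdn[OF K]] Nn_def by auto
  show ?thesis unfolding g_def[symmetric]
  proof (rule det_from_qf[OF hessian_carrier])
    fix v :: "real Matrix.vec" assume v: "v \<in> carrier_vec (n1 * n2)" "v \<noteq> 0\<^sub>v (n1 * n2)"
    define V where "V = mat_of_vecm n1 n2 (\<lambda>k. v $ k)"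
    define F where "F = Fk n1 n2 V"
    have Bv: "mat ((\<lambda>_. Nn) k) ((\<lambda>_. Nn) k) (\<lambda>(a,b). \<Sum>i<n1 * n2. v $ i * Bm k i $$ (a,b)) = F" for k
      unfolding Bm_def E'_def F_def V_def Nn_def by (rule Fk_Bv[OF v(1)])
    have qf: "v \<bullet> (hessian g (n1 * n2) (vecm n1 N) *\<^sub>v v) =
       - (\<Sum>k\<in>{0,1}. c k * mtrace (inv' (M k (vecm n1 N)) * F * inv' (M k (vecm n1 N)) * F))"
      using hess_qf[of "{0::nat,1}" M "\<lambda>_. Nn" Bm g c0 c "vecm n1 N" v "n1 * n2", OF fin carM carB aff geq good v(1)]
      unfolding Bv .
    define Ta where "Ta = mtrace (inv' (Kmat n1 n2 N + C0) * F * inv' (Kmat n1 n2 N + C0) * F)"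
    define Tb where "Tb = mtrace (inv' (Kmat n1 n2 N) * F * inv' (Kmat n1 n2 N) * F)"
    have qf2: "v \<bullet> (hessian g (n1 * n2) (vecm n1 N) *\<^sub>v v) = (1 + 1 / t) * Tb - Ta"
      unfolding qf M_def x0 c_def Ta_def Tb_def by (simp add: algebra_simps)
    have Fc: "F \<in> carrier_mat Nn Nn" unfolding F_def Nn_def by simp
    have Fs: "transpose_mat F = F" unfolding F_def V_def by (rule Fk_sym) simp
    have Fnz: "F \<noteq> 0\<^sub>m Nn Nn" unfolding F_def Nn_def V_def
      by (rule Fk_nz) (use mat_of_vecm_nz[OF v] in auto)
    have le: "Ta \<le> Tb" unfolding Ta_def Tb_def C0_def
      by (rule var_mono[OF K R _ _ Fs]) (use Hc Fc Nn_def in auto)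
    have pos: "Tb > 0" unfolding Tb_def
      by (rule trace_sq(2)[OF inv_pos_def[OF K] _ Fs]) (use Fc Fnz Nn_def in auto)
    have "Tb / t > 0" using pos t by simp
    hence "(1 + 1 / t) * Tb - Ta > 0" using le by (simp add: algebra_simps)
    thus "v \<bullet> (hessian g (n1 * n2) (vecm n1 N) *\<^sub>v v) \<noteq> 0" unfolding qf2 by simp
  qed
qed



lemma sum_split4: fixes F :: "nat \<Rightarrow> real"
  shows "(\<Sum>k\<in>{0..J+3}. F k) = F 0 + F 1 + F 2 + F 3 + (\<Sum>j\<in>{1..J}. F (j + 3))"
proof -
  have "{0..J+3} = {0,1,2,3} \<union> {4..J+3}" by auto
  hence "(\<Sum>k\<in>{0..J+3}. F k) = (\<Sum>k\<in>{0,1,2,3}. F k) + (\<Sum>k\<in>{4..J+3}. F k)"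
    by (simp add: sum.union_disjoint)
  also have "(\<Sum>k\<in>{4..J+3}. F k) = (\<Sum>j\<in>{1..J}. F (j + 3))"
    using sum.shift_bounds_cl_nat_ivl[of F 1 3 J] by simp
  finally show ?thesis by simp
qed

lemma psd_one: "psd n (1\<^sub>m n)"
  unfolding psd_def by (auto simp: scalar_prod_def intro!: sum_nonneg)

lemma pos_def_one: "pos_def n (1\<^sub>m n)"
  unfolding pos_def_def
proof (intro conjI ballI impI)
  fix w :: "real Matrix.vec" assume w: "w \<in> carrier_vec n" "w \<noteq> 0\<^sub>v n"
  obtain a where a: "a < n" "w $ a \<noteq> 0" using w by (metis eq_vecI carrier_vecD index_zero_vec(1) index_zero_vec(2))
  have "w \<bullet> (1\<^sub>m n *\<^sub>v w) = (\<Sum>i<n. w $ i * w $ i)" using w by (simp add: scalar_prod_def atLeast0LessThan)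
  also have "\<dots> > 0"
  proof (rule sum_pos2[of _ a])
    show "0 < w $ a * w $ a" using a(2) by (metis not_real_square_gt_zero)
  qed (use a in auto)
  finally show "0 < w \<bullet> (1\<^sub>m n *\<^sub>v w)" .
qed auto

lemma mat_eq_entry: "mat n m f = A \<Longrightarrow> a < n \<Longrightarrow> b < m \<Longrightarrow> A $$ (a,b) = f (a,b)"
  by auto

lemma x_side:
  fixes H1 H2 R N :: "real mat" and W3 :: "nat \<Rightarrow> real mat" and PI :: "nat \<Rightarrow> real" and PT t :: real
  assumes H1: "H1 \<in> carrier_mat n1 m" and H2: "H2 \<in> carrier_mat n2 m" and t: "t > 0"
    and W3: "\<forall>j\<in>{1..J}. W3 j \<in> carrier_mat m m"
    and R: "pos_def m R" and trR: "mtrace R < PT" and trW: "\<forall>j\<in>{1..J}. mtrace (W3 j * R) < PI j"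
    and N: "N \<in> carrier_mat n1 n2" and K: "pos_def (n1 + n2) (Kmat n1 n2 N)"
  shows "det (hessian (\<lambda>x. f_bar H1 H2 J W3 PT PI t (mat_of_veh m x) (Kmat n1 n2 N))
            (m * (m + 1) div 2) (veh m R)) \<noteq> 0"
proof -
  define Nn where "Nn = n1 + n2"
  define H where "H = H1 @\<^sub>r H2"
  have Hc: "H \<in> carrier_mat Nn m" unfolding H_def Nn_def using H1 H2 by auto
  have Rc: "R \<in> carrier_mat m m" using R by (simp add: pos_def_carrier)
  define Km where "Km = Kmat n1 n2 N"
  have Kc: "Km \<in> carrier_mat Nn Nn" unfolding Km_def Nn_def by simp
  have Kpd: "pos_def Nn Km" using K unfolding Km_def Nn_def .
  have dK: "det Km > 0" using pdn_det_pos[OF pos_def_pdn[OF Kpd]] .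
  define Ki where "Ki = inv' Km"
  have Kic: "Ki \<in> carrier_mat Nn Nn" unfolding Ki_def using Kc by simp
  have minvK: "minv Km = Ki" unfolding Ki_def by (rule minv_inv'[OF Kc]) (use dK in auto)
  define W2 where "W2 = transpose_mat H2 * H2"
  have W2c: "W2 \<in> carrier_mat m m" unfolding W2_def using H2 by auto
  define E where "E i = mat_of_veh m (\<lambda>k. if k = i then 1 else 0)" for i
  have Ec: "E i \<in> carrier_mat m m" for i unfolding E_def by simp
  define M where "M k z = (if k = 0 then 1\<^sub>m Nn + Ki * H * mat_of_veh m z * transpose_mat H
     else if k = 1 then 1\<^sub>m m + W2 * mat_of_veh m z else if k = 2 then mat_of_veh m z
     else if k = 3 then mat 1 1 (\<lambda>_. PT - mtrace (mat_of_veh m z))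
     else mat 1 1 (\<lambda>_. PI (k - 3) - mtrace (W3 (k - 3) * mat_of_veh m z)))" for k :: nat and z
  define nk where "nk k = (if k = 0 then Nn else if k \<le> 2 then m else 1)" for k :: nat
  define Bm where "Bm k i = (if k = 0 then Ki * H * E i * transpose_mat H
     else if k = 1 then W2 * E i else if k = 2 then E i
     else if k = 3 then mat 1 1 (\<lambda>_. - mtrace (E i))
     else mat 1 1 (\<lambda>_. - mtrace (W3 (k - 3) * E i)))" for k :: nat and i
  define c where "c k = (if k = 0 then 1 else if k = 1 then -1 else 1 / t)" for k :: nat
  define c0 where "c0 = - ln (det Km) / t"
  define g where "g x = f_bar H1 H2 J W3 PT PI t (mat_of_veh m x) (Kmat n1 n2 N)" for x
  let ?S = "{0..J+3}"
  have fin: "finite ?S" by simp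
  have W3k: "W3 (k - 3) \<in> carrier_mat m m" if "k \<in> ?S" "k \<noteq> 0" "k \<noteq> 1" "k \<noteq> 2" "k \<noteq> 3" for k
  proof -
    have "k - 3 \<in> {1..J}" using that by auto
    thus ?thesis using W3 by blast
  qed
  note dims = carrier_matD[OF Hc] carrier_matD[OF Rc] carrier_matD[OF Kc] carrier_matD[OF Kic]
    carrier_matD[OF W2c] carrier_matD[OF H1] carrier_matD[OF H2]
  have carM: "M k z \<in> carrier_mat (nk k) (nk k)" if "k \<in> ?S" for k z
    unfolding M_def nk_def using Hc Kic W2c by auto
  have carB: "Bm k i \<in> carrier_mat (nk k) (nk k)" if "k \<in> ?S" for k i
    unfolding Bm_def nk_def using Hc Kic W2c Ec[of i] by auto
  have aff: "M k (z(i := z i + s)) = M k z + s \<cdot>\<^sub>m Bm k i" if k: "k \<in> ?S" for k z i s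
  proof -
    let ?A = "mat_of_veh m z"
    have upd: "mat_of_veh m (z(i := z i + s)) = ?A + s \<cdot>\<^sub>m E i" unfolding E_def by (rule mat_of_veh_upd)
    have dA: "dim_row ?A = m" "dim_col ?A = m" "dim_row (E i) = m" "dim_col (E i) = m" by (auto simp: E_def)
    consider "k = 0" | "k = 1" | "k = 2" | "k = 3" | "k \<noteq> 0 \<and> k \<noteq> 1 \<and> k \<noteq> 2 \<and> k \<noteq> 3" by blast
    thus ?thesis
    proof cases
      case 1
      have "1\<^sub>m Nn + Ki * H * (?A + s \<cdot>\<^sub>m E i) * transpose_mat H =
            1\<^sub>m Nn + Ki * H * ?A * transpose_mat H + s \<cdot>\<^sub>m (Ki * H * E i * transpose_mat H)"
        using dims dA by (simp add: madd_r madd_l msmult_r msmult_l add_assoc')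
      thus ?thesis unfolding M_def Bm_def upd using 1 by simp
    next
      case 2
      have "1\<^sub>m m + W2 * (?A + s \<cdot>\<^sub>m E i) = 1\<^sub>m m + W2 * ?A + s \<cdot>\<^sub>m (W2 * E i)"
        using dims dA by (simp add: madd_r msmult_r add_assoc')
      thus ?thesis unfolding M_def Bm_def upd using 2 by simp
    next
      case 3
      thus ?thesis unfolding M_def Bm_def upd by simp
    next
      case 4
      have "mtrace (?A + s \<cdot>\<^sub>m E i) = mtrace ?A + s * mtrace (E i)"
        using mtrace_add[of ?A m "s \<cdot>\<^sub>m E i"] mtrace_smult[OF Ec[of i], of s] Ec[of i] by simp
      thus ?thesis unfolding M_def Bm_def upd using 4 by (auto intro!: eq_matI)
    next
      case 5
      have W: "W3 (k - 3) \<in> carrier_mat m m" using W3k[OF k] 5 by auto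
      have "W3 (k - 3) * (?A + s \<cdot>\<^sub>m E i) = W3 (k - 3) * ?A + s \<cdot>\<^sub>m (W3 (k - 3) * E i)"
        using dA carrier_matD[OF W] by (simp add: madd_r msmult_r)
      hence "mtrace (W3 (k - 3) * (?A + s \<cdot>\<^sub>m E i)) = mtrace (W3 (k - 3) * ?A) + s * mtrace (W3 (k - 3) * E i)"
        using W Ec[of i] mtrace_add[of "W3 (k - 3) * ?A" m "s \<cdot>\<^sub>m (W3 (k - 3) * E i)"]
          mtrace_smult[of "W3 (k - 3) * E i" m s] by simp
      thus ?thesis unfolding M_def Bm_def upd using 5 by (auto intro!: eq_matI)
    qed
  qed
  have geq: "g z = c0 + (\<Sum>k\<in>?S. c k * ln (det (M k z)))" for z
  proof -
    let ?A = "mat_of_veh m z"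
    have d11: "det (mat 1 1 f) = f (0,0)" for f :: "nat \<times> nat \<Rightarrow> real" by (subst det_single) auto
    have d11': "det (mat (Suc 0) (Suc 0) f) = f (0,0)" for f :: "nat \<times> nat \<Rightarrow> real" by (subst det_single) auto
    have s: "(\<Sum>j\<in>{1..J}. c (j + 3) * ln (det (M (j + 3) z))) = (\<Sum>j\<in>{1..J}. ln (PI j - mtrace (W3 j * ?A)) / t)"
      by (intro sum.cong refl) (auto simp: c_def M_def d11 d11')
    have fo: "f_obj H1 H2 ?A (Kmat n1 n2 N) = ln (det (M 0 z)) - ln (det (M 1 z))"
      unfolding f_obj_def Let_def H_def[symmetric] W2_def[symmetric] Km_def[symmetric] minvK M_def
      using Hc by simp
    show ?thesis unfolding g_def f_bar_def fo sum_split4 s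
      by (simp add: c_def c0_def M_def d11 d11' Km_def)
  qed
  have x0: "mat_of_veh m (veh m R) = R" by (rule mat_of_veh_veh[OF Rc pos_def_sym[OF R]])
  define C0 where "C0 = H * R * transpose_mat H"
  have C0c: "C0 \<in> carrier_mat Nn Nn" unfolding C0_def using Hc Rc by auto
  have \<Sigma>pd: "pos_def Nn (Km + C0)" unfolding C0_def by (rule pos_def_add_C[OF Kpd R Hc])
  have \<Sigma>c: "Km + C0 \<in> carrier_mat Nn Nn" using Kc C0c by auto
  have d\<Sigma>: "det (Km + C0) > 0" using pdn_det_pos[OF pos_def_pdn[OF \<Sigma>pd]] .
  have A0eq: "1\<^sub>m Nn + Ki * H * R * transpose_mat H = Ki * (Km + C0)"
  proof -
    have "Ki * (Km + C0) = Ki * Km + Ki * C0" by (rule mult_add_distrib_mat[OF Kic Kc C0c])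
    also have "Ki * Km = 1\<^sub>m Nn" unfolding Ki_def using inv'_left[OF Kc] dK by simp
    also have "Ki * C0 = Ki * H * R * transpose_mat H" unfolding C0_def using dims by (simp add: massoc)
    finally show ?thesis by simp
  qed
  have dA0: "det (1\<^sub>m Nn + Ki * H * R * transpose_mat H) > 0"
  proof -
    have "det (Ki * (Km + C0)) = det Ki * det (Km + C0)" by (rule det_mult[OF Kic \<Sigma>c])
    also have "det Ki = 1 / det Km" unfolding Ki_def by (rule det_inv'[OF Kc]) (use dK in auto)
    finally show ?thesis unfolding A0eq using dK d\<Sigma> by simp
  qed
  define Ri where "Ri = inv' R"
  have Rip: "pos_def m Ri" unfolding Ri_def by (rule inv_pos_def[OF R])
  have Ric: "Ri \<in> carrier_mat m m" using Rip by (simp add: pos_def_carrier)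
  have dR: "det R > 0" using pdn_det_pos[OF pos_def_pdn[OF R]] .
  have W2psd: "psd m W2"
  proof -
    have "psd m (transpose_mat H2 * 1\<^sub>m n2 * H2)" by (rule psd_cong[OF psd_one H2])
    thus ?thesis unfolding W2_def using H2 by simp
  qed
  have dA1: "det (1\<^sub>m m + W2 * R) > 0"
  proof -
    have "(Ri + W2) * R = Ri * R + W2 * R" by (rule add_mult_distrib_mat[OF Ric W2c Rc])
    also have "Ri * R = 1\<^sub>m m" unfolding Ri_def using inv'_left[OF Rc] dR by simp
    finally have eq: "1\<^sub>m m + W2 * R = (Ri + W2) * R" by simp
    have "det ((Ri + W2) * R) = det (Ri + W2) * det R" by (rule det_mult) (use Ric W2c Rc in auto)
    moreover have "det (Ri + W2) > 0" by (rule pdn_det_pos[OF pdn_add_psd[OF pos_def_pdn[OF Rip] W2psd]])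
    ultimately show ?thesis unfolding eq using dR by simp
  qed
  have good: "\<forall>k\<in>?S. det (M k (veh m R)) > 0"
  proof
    fix k assume k: "k \<in> ?S"
    have d11: "det (mat 1 1 f) = f (0,0)" for f :: "nat \<times> nat \<Rightarrow> real" by (subst det_single) auto
    have d11': "det (mat (Suc 0) (Suc 0) f) = f (0,0)" for f :: "nat \<times> nat \<Rightarrow> real" by (subst det_single) auto
    consider "k = 0" | "k = 1" | "k = 2" | "k = 3" | "k \<noteq> 0 \<and> k \<noteq> 1 \<and> k \<noteq> 2 \<and> k \<noteq> 3" by blast
    thus "det (M k (veh m R)) > 0"
    proof cases
      case 5
      hence "k - 3 \<in> {1..J}" using k by auto
      thus ?thesis using 5 trW unfolding M_def x0 by (auto simp: d11 d11')
    qed (auto simp: M_def x0 dA0 dA1 dR d11 d11' trR)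
  qed
  show ?thesis unfolding g_def[symmetric]
  proof (rule det_from_qf[OF hessian_carrier])
    let ?d = "m * (m + 1) div 2"
    fix v :: "real Matrix.vec" assume v: "v \<in> carrier_vec ?d" "v \<noteq> 0\<^sub>v ?d"
    define V where "V = mat_of_veh m (\<lambda>k. v $ k)"
    have Vc: "V \<in> carrier_mat m m" unfolding V_def by simp
    have Vs: "transpose_mat V = V" unfolding V_def by (rule mat_of_veh_sym)
    have Vnz: "V \<noteq> 0\<^sub>m m m" unfolding V_def by (rule mat_of_veh_nz[OF v])
    have VE: "V $$ (a,b) = (\<Sum>i<?d. v $ i * E i $$ (a,b))" if "a < m" "b < m" for a b
      using mat_eq_entry[OF mat_of_veh_Bv[OF v(1)] that] unfolding E_def V_def by simp
    define Bv where "Bv k = mat (nk k) (nk k) (\<lambda>(a,b). \<Sum>i<?d. v $ i * Bm k i $$ (a,b))" for k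
    define T where "T k = mtrace (inv' (M k (veh m R)) * Bv k * inv' (M k (veh m R)) * Bv k)" for k
    have qf: "v \<bullet> (hessian g ?d (veh m R) *\<^sub>v v) = - (\<Sum>k\<in>?S. c k * T k)"
      unfolding T_def Bv_def
      by (rule hess_qf[of ?S M nk Bm g c0 c "veh m R" v ?d, OF fin carM carB aff geq good v(1)])
    have Bv2: "Bv 2 = V" unfolding Bv_def nk_def Bm_def E_def V_def using mat_of_veh_Bv[OF v(1)] by simp
    have Bv0: "Bv 0 = Ki * H * V * transpose_mat H"
      unfolding Bv_def nk_def Bm_def
      by (simp, rule lin_sandwich[of _ Nn m _ Nn]) (use Kic Hc Vc Ec VE in auto)
    have Bv1: "Bv 1 = W2 * V"
    proof -
      have "mat m m (\<lambda>(a,b). \<Sum>i<?d. v $ i * (W2 * E i * 1\<^sub>m m) $$ (a,b)) = W2 * V * 1\<^sub>m m"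
        by (rule lin_sandwich[of _ m m _ m]) (use W2c Vc Ec VE in auto)
      moreover have "W2 * E i * 1\<^sub>m m = W2 * E i" for i using W2c Ec[of i] by simp
      moreover have "W2 * V * 1\<^sub>m m = W2 * V" using W2c Vc by simp
      ultimately show ?thesis unfolding Bv_def nk_def Bm_def by simp
    qed
    have M2: "inv' (M 2 (veh m R)) = Ri" by (simp add: M_def x0 Ri_def)
    have T2: "T 2 > 0" unfolding T_def Bv2 M2 by (rule trace_sq(2)[OF Rip Vc Vs Vnz])
    have T3: "T k \<ge> 0" if "k \<in> ?S" "k \<noteq> 0" "k \<noteq> 1" "k \<noteq> 2" for k
    proof -
      have "nk k = 1" unfolding nk_def using that by auto
      hence "inv' (M k (veh m R)) \<in> carrier_mat 1 1" "Bv k \<in> carrier_mat 1 1"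
        using carM[OF that(1)] unfolding Bv_def by auto
      thus ?thesis unfolding T_def by (rule tr11)
    qed
    define \<Sigma> where "\<Sigma> = Km + C0"
    define S where "S = inv' \<Sigma>"
    define B where "B = H * V * transpose_mat H"
    have Bc: "B \<in> carrier_mat Nn Nn" unfolding B_def using Hc Vc by auto
    have Bs: "transpose_mat B = B" unfolding B_def using dims carrier_matD[OF Vc] Vs by (simp add: tmult massoc)
    define Y0 where "Y0 = inv' (1\<^sub>m Nn + Ki * H * R * transpose_mat H)"
    have A0c: "1\<^sub>m Nn + Ki * H * R * transpose_mat H \<in> carrier_mat Nn Nn" using Kic Hc Rc by auto
    have Y0K: "Y0 * Ki = S"
    proof -
      have "(Y0 * Ki) * \<Sigma> = Y0 * (Ki * \<Sigma>)" unfolding \<Sigma>_def using Kic \<Sigma>c Y0_def A0c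
        by (simp add: assoc_mult_mat[of _ Nn Nn _ Nn _ Nn])
      also have "Ki * \<Sigma> = 1\<^sub>m Nn + Ki * H * R * transpose_mat H" unfolding \<Sigma>_def A0eq ..
      also have "Y0 * \<dots> = 1\<^sub>m Nn" unfolding Y0_def by (rule inv'_left[OF A0c]) (use dA0 in auto)
      finally show ?thesis unfolding S_def \<Sigma>_def
        by (intro inv_unique_l[OF \<Sigma>c]) (use d\<Sigma> Kic Y0_def A0c in auto)
    qed
    have Sc: "S \<in> carrier_mat Nn Nn" unfolding S_def \<Sigma>_def using \<Sigma>c by simp
    have Y0c: "Y0 \<in> carrier_mat Nn Nn" unfolding Y0_def by (rule inv'_carrier[OF A0c])
    have r0: "\<And>W. dim_row W = Nn \<Longrightarrow> Y0 * (Ki * W) = S * W"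
      using Y0K dims carrier_matD[OF Y0c] by (metis massoc)
    have T0: "T 0 = mtrace (S * B * S * B)"
    proof -
      have "inv' (M 0 (veh m R)) = Y0" unfolding M_def x0 Y0_def by simp
      hence "T 0 = mtrace (Y0 * (Ki * H * V * transpose_mat H) * Y0 * (Ki * H * V * transpose_mat H))"
        unfolding T_def Bv0 by simp
      also have "Y0 * (Ki * H * V * transpose_mat H) * Y0 * (Ki * H * V * transpose_mat H) = S * B * S * B"
        unfolding B_def using dims carrier_matD[OF Y0c] carrier_matD[OF Sc] carrier_matD[OF Vc]
        by (simp add: massoc r0)
      finally show ?thesis .
    qed
    define \<Sigma>2 where "\<Sigma>2 = 1\<^sub>m n2 + H2 * R * transpose_mat H2"
    have \<Sigma>2pd: "pos_def n2 \<Sigma>2" unfolding \<Sigma>2_def by (rule pos_def_add_C[OF pos_def_one R H2])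
    have \<Sigma>2c: "\<Sigma>2 \<in> carrier_mat n2 n2" using \<Sigma>2pd by (simp add: pos_def_carrier)
    have d\<Sigma>2: "det \<Sigma>2 \<noteq> 0" using pos_def_det[OF \<Sigma>2pd] .
    define S2 where "S2 = inv' \<Sigma>2"
    have S2c: "S2 \<in> carrier_mat n2 n2" unfolding S2_def using \<Sigma>2c by simp
    define Y1 where "Y1 = inv' (1\<^sub>m m + W2 * R)"
    have A1c: "1\<^sub>m m + W2 * R \<in> carrier_mat m m" using W2c Rc by auto
    have Y1c: "Y1 \<in> carrier_mat m m" unfolding Y1_def using A1c by simp
    have Y1H: "Y1 * transpose_mat H2 = transpose_mat H2 * S2"
    proof -
      have H2t: "transpose_mat H2 \<in> carrier_mat m n2" using H2 by simp
      have eq: "transpose_mat H2 * \<Sigma>2 = (1\<^sub>m m + W2 * R) * transpose_mat H2"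
        unfolding \<Sigma>2_def W2_def using dims by (simp add: madd_r madd_l massoc)
      have "Y1 * transpose_mat H2 = Y1 * (transpose_mat H2 * (\<Sigma>2 * S2))"
        unfolding S2_def using inv'_right[OF \<Sigma>2c d\<Sigma>2] H2t by simp
      also have "\<dots> = (Y1 * (1\<^sub>m m + W2 * R)) * (transpose_mat H2 * S2)"
        using eq dims carrier_matD[OF Y1c] carrier_matD[OF \<Sigma>2c] carrier_matD[OF S2c] carrier_matD[OF A1c]
        by (simp add: massoc[symmetric])
      also have "Y1 * (1\<^sub>m m + W2 * R) = 1\<^sub>m m" unfolding Y1_def by (rule inv'_left[OF A1c]) (use dA1 in auto)
      finally show ?thesis using H2t S2c by simp
    qed
    have r1: "\<And>W. dim_row W = n2 \<Longrightarrow> Y1 * (transpose_mat H2 * W) = transpose_mat H2 * (S2 * W)"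
      using Y1H dims carrier_matD[OF Y1c] carrier_matD[OF S2c] by (metis massoc index_transpose_mat(2,3))
    define B22 where "B22 = H2 * V * transpose_mat H2"
    have T1: "T 1 = mtrace (S2 * B22 * S2 * B22)"
    proof -
      have "inv' (M 1 (veh m R)) = Y1" unfolding M_def x0 Y1_def by simp
      hence "T 1 = mtrace (Y1 * (transpose_mat H2 * (H2 * V)) * Y1 * (transpose_mat H2 * (H2 * V)))"
        unfolding T_def Bv1 W2_def using dims carrier_matD[OF Vc] by (simp add: massoc)
      also have "Y1 * (transpose_mat H2 * (H2 * V)) * Y1 * (transpose_mat H2 * (H2 * V)) =
          transpose_mat H2 * (S2 * (H2 * (V * (transpose_mat H2 * (S2 * (H2 * V))))))"
        using dims carrier_matD[OF Y1c] carrier_matD[OF S2c] carrier_matD[OF Vc] by (simp add: massoc r1)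
      also have "mtrace \<dots> = mtrace ((S2 * (H2 * (V * (transpose_mat H2 * (S2 * (H2 * V)))))) * transpose_mat H2)"
        using dims carrier_matD[OF S2c] carrier_matD[OF Vc] by (simp add: mtrace_rot)
      also have "\<dots> = mtrace (S2 * B22 * S2 * B22)"
        unfolding B22_def using dims carrier_matD[OF S2c] carrier_matD[OF Vc] by (simp add: massoc)
      finally show ?thesis .
    qed
    define Es where "Es = selE n1 n2"
    have Esc: "Es \<in> carrier_mat n2 Nn" unfolding Es_def Nn_def by simp
    have EH: "Es * H = H2" unfolding Es_def H_def by (rule selE_H[OF H1 H2])
    have EHt: "transpose_mat H * transpose_mat Es = transpose_mat H2"
      using EH tmult[of Es H] dims carrier_matD[OF Esc] by simp
    have EK: "Es * Km * transpose_mat Es = 1\<^sub>m n2" unfolding Es_def Km_def by (rule selE_K)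
    have rE: "\<And>W. dim_row W = m \<Longrightarrow> Es * (H * W) = H2 * W"
      using EH dims carrier_matD[OF Esc] by (metis massoc)
    have rEt: "\<And>W. dim_row W = Nn \<Longrightarrow> W * transpose_mat Es = W * transpose_mat Es" by simp
    have E\<Sigma>: "Es * \<Sigma> * transpose_mat Es = \<Sigma>2"
    proof -
      have "Es * \<Sigma> * transpose_mat Es = Es * Km * transpose_mat Es + Es * C0 * transpose_mat Es"
        unfolding \<Sigma>_def using dims carrier_matD[OF Esc] carrier_matD[OF C0c] by (simp add: madd_r madd_l)
      also have "Es * C0 * transpose_mat Es = H2 * R * transpose_mat H2"
      proof -
        have "Es * C0 * transpose_mat Es = (Es * H) * R * (transpose_mat H * transpose_mat Es)"
          unfolding C0_def using dims carrier_matD[OF Esc] by (simp add: massoc)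
        thus ?thesis unfolding EH EHt .
      qed
      finally show ?thesis unfolding EK \<Sigma>2_def .
    qed
    have EB: "Es * B * transpose_mat Es = B22"
    proof -
      have "Es * B * transpose_mat Es = (Es * H) * V * (transpose_mat H * transpose_mat Es)"
        unfolding B_def using dims carrier_matD[OF Esc] carrier_matD[OF Vc] by (simp add: massoc)
      thus ?thesis unfolding EH EHt B22_def .
    qed
    have T01: "T 1 \<le> T 0"
    proof -
      have "mtrace (inv' (Es * \<Sigma> * transpose_mat Es) * (Es * B * transpose_mat Es) *
                 inv' (Es * \<Sigma> * transpose_mat Es) * (Es * B * transpose_mat Es))
         \<le> mtrace (inv' \<Sigma> * B * inv' \<Sigma> * B)"
        by (rule var_x[OF _ Esc Bc Bs]) (use \<Sigma>pd E\<Sigma> d\<Sigma>2 \<Sigma>_def in auto)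
      thus ?thesis unfolding T0 T1 E\<Sigma> EB S_def S2_def .
    qed
    have sum: "(\<Sum>k\<in>?S. c k * T k) = T 0 - T 1 + (T 2 + T 3 + (\<Sum>j\<in>{1..J}. T (j + 3))) / t"
      unfolding sum_split4 c_def by (simp add: sum_divide_distrib add_divide_distrib)
    have "(\<Sum>j\<in>{1..J}. T (j + 3)) \<ge> 0" by (rule sum_nonneg) (rule T3, auto)
    moreover have "T 3 \<ge> 0" by (rule T3) auto
    ultimately have "(T 2 + T 3 + (\<Sum>j\<in>{1..J}. T (j + 3))) / t > 0" using T2 t by simp
    hence "(\<Sum>k\<in>?S. c k * T k) > 0" unfolding sum using T01 by linarith
    thus "v \<bullet> (hessian g ?d (veh m R) *\<^sub>v v) \<noteq> 0" unfolding qf by simp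
  qed
qed


theorem lemma1:
  fixes m n1 n2 J :: nat
    and H1 H2 :: "real mat" and H3 :: "nat \<Rightarrow> real mat" and n3 :: "nat \<Rightarrow> nat"
    and PT t :: real and PI :: "nat \<Rightarrow> real"
    and R N :: "real mat"
  assumes "m \<ge> 1" "n1 \<ge> 1" "n2 \<ge> 1"
    and "H1 \<in> carrier_mat n1 m" "H2 \<in> carrier_mat n2 m"
    and "\<forall>j\<in>{1..J}. n3 j \<ge> 1 \<and> H3 j \<in> carrier_mat (n3 j) m"
    and "PT > 0" "\<forall>j\<in>{1..J}. PI j > 0"
    and "t > 0"
    and "R \<in> SR m PT J (\<lambda>j. transpose_mat (H3 j) * H3 j) PI"
    and "N \<in> carrier_mat n1 n2" "Kmat n1 n2 N \<in> SK n1 n2"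
  shows "det (hessian
            (\<lambda>x. f_bar H1 H2 J (\<lambda>j. transpose_mat (H3 j) * H3 j) PT PI t
                   (mat_of_veh m x) (Kmat n1 n2 N))
            (m * (m + 1) div 2) (veh m R)) \<noteq> 0
       \<and> det (hessian
            (\<lambda>y. f_bar H1 H2 J (\<lambda>j. transpose_mat (H3 j) * H3 j) PT PI t
                   R (Kmat n1 n2 (mat_of_vecm n1 n2 y)))
            (n1 * n2) (vecm n1 N)) \<noteq> 0"
proof -
  have R: "pos_def m R" and trR: "mtrace R < PT"
    and trW: "\<forall>j\<in>{1..J}. mtrace ((\<lambda>j. transpose_mat (H3 j) * H3 j) j * R) < PI j"
    using assms(10) unfolding SR_def by auto
  have K: "pos_def (n1 + n2) (Kmat n1 n2 N)" using assms(12) unfolding SK_def by auto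
  have W3: "\<forall>j\<in>{1..J}. (\<lambda>j. transpose_mat (H3 j) * H3 j) j \<in> carrier_mat m m"
    using assms(6) by auto
  show ?thesis
    using x_side[OF assms(4) assms(5) assms(9) W3 R trR trW assms(11) K]
      y_side[OF assms(4) assms(5) assms(9) R assms(11) K] by blast
qed

end
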